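(* Assume the setting of the context (in particular $\rho\ge0$, $r+\frac\rho2\ge1$, $p>1$, $c^2<c_1^2$). Then every $\Phi_c\in\mathcal{G}_c$ is a minimizer of $U\mapsto\mathcal{E}(U)+c\,\mathcal{M}(U)$ over $U=(u,w)\in X$ subject to the constraint $\mathcal{Q}(u)=2^{\frac{p+1}{p-1}}[m_1(c)]^{\frac{p+1}{p-1}}$.
   Context: $L$ and $B$ are Fourier multiplier operators on $\mathbb{R}$, $\widehat{Lu}=l\widehat u$, $\widehat{Bu}=b\widehat u$, with smooth real symbols of orders $\rho\ge0$ and $-r$, $r\ge0$, $r+\frac\rho2\ge1$; for all $k$, $\frac{d^k}{d\xi^k}l=O(|\xi|^{\rho-k})$, $\frac{d^k}{d\xi^k}b=O(|\xi|^{-r-k})$ as $|\xi|\to\infty$; and with best constants $c_i>0$, $c_1^2(1+\xi^2)^{\rho/2}\le l(\xi)\le c_2^2(1+\xi^2)^{\rho/2}$, $c_3^2(1+\xi^2)^{-r/2}\le b(\xi)\le c_4^2(1+\xi^2)^{-r/2}$. $L^{1/2}B^{-1/2}$, $B^{-1/2}$ have symbols $l^{1/2}b^{-1/2}$, $b^{-1/2}$. Let $s_0=\frac{r+\rho}2$, $X=H^{s_0}\times H^{s_0-\rho/2}$ (Sobolev spaces on $\mathbb{R}$), $p>1$. For $\psi\in H^{s_0}$: $\mathcal{I}_c(\psi)=\frac12\|L^{1/2}B^{-1/2}\psi\|_{L^2}^2-\frac{c^2}2\|B^{-1/2}\psi\|_{L^2}^2$, $\mathcal{Q}(\psi)=\int|\psi|^{p+1}dx$,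 and $m_1(c)=\inf\{\mathcal{I}_c(\psi):\psi\in H^{s_0},\mathcal{Q}(\psi)=1\}$. For $U=(u,w)\in X$: $\mathcal{E}(U)=\frac12\|B^{-1/2}w\|_{L^2}^2+\frac12\|L^{1/2}B^{-1/2}u\|_{L^2}^2-\frac1{p+1}\|u\|_{L^{p+1}}^{p+1}$ and $\mathcal{M}(U)=\int(B^{-1/2}u)(B^{-1/2}w)dx$. Let $G_c=\{[2m_1(c)]^{1/(p-1)}\psi:\ \psi\in H^{s_0},\ \mathcal{Q}(\psi)=1,\ \mathcal{I}_c(\psi)=m_1(c)\}$ (the traveling wave profiles of speed $c$ for $u_{tt}-Lu_{xx}=-B(|u|^{p-1}u)_{xx}$), and $\mathcal{G}_c=\{(\phi,-c\phi):\phi\in G_c\}\subset X$. *)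

theory Defs
  imports "HOL-Analysis.Analysis"
begin

definition ft_trunc :: "(real \<Rightarrow> real) \<Rightarrow> real \<Rightarrow> real \<Rightarrow> complex" where
  "ft_trunc u n \<xi> =
     (LINT x:{-n..n}|lborel. complex_of_real (u x) * cis (- (x * \<xi>)))
       / complex_of_real (sqrt (2 * pi))"

definition is_fourier_L2 :: "(real \<Rightarrow> real) \<Rightarrow> (real \<Rightarrow> complex) \<Rightarrow> bool" where
  "is_fourier_L2 u v \<longleftrightarrow>
     v \<in> borel_measurable lborel \<and>
     integrable lborel (\<lambda>\<xi>. (cmod (v \<xi>))\<^sup>2) \<and>
     ((\<lambda>n::nat. \<integral>\<^sup>+ \<xi>. ennreal ((cmod (v \<xi> - ft_trunc u (real n) \<xi>))\<^sup>2) \<partial>lborel)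
        \<longlonglongrightarrow> 0)"

definition fourier_L2 :: "(real \<Rightarrow> real) \<Rightarrow> real \<Rightarrow> complex" where
  "fourier_L2 u = (SOME v. is_fourier_L2 u v)"

definition sobolev :: "real \<Rightarrow> (real \<Rightarrow> real) set" where
  "sobolev s = {u. u \<in> borel_measurable lborel \<and>
                   integrable lborel (\<lambda>x. (u x)\<^sup>2) \<and>
                   integrable lborel (\<lambda>\<xi>. (1 + \<xi>\<^sup>2) powr s * (cmod (fourier_L2 u \<xi>))\<^sup>2)}"

definition smooth_fun :: "(real \<Rightarrow> real) \<Rightarrow> bool" where
  "smooth_fun f \<longleftrightarrow> (\<forall>k::nat. \<forall>\<xi>. ((deriv ^^ k) f) differentiable (at \<xi>))"

definition symbol_order :: "(real \<Rightarrow> real) \<Rightarrow> real \<Rightarrow> bool" where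
  "symbol_order f m \<longleftrightarrow>
     (\<forall>k::nat. \<exists>C R. \<forall>\<xi>. R \<le> \<bar>\<xi>\<bar> \<longrightarrow> \<bar>(deriv ^^ k) f \<xi>\<bar> \<le> C * \<bar>\<xi>\<bar> powr (m - real k))"

definition best_lower :: "(real \<Rightarrow> real) \<Rightarrow> real \<Rightarrow> real" where
  "best_lower f a = Inf (range (\<lambda>\<xi>. f \<xi> / (1 + \<xi>\<^sup>2) powr (a / 2)))"

text \<open>||L^{1/2} B^{-1/2} psi||^2 and ||B^{-1/2} psi||^2 via Plancherel.\<close>
definition LB_norm2 :: "(real \<Rightarrow> real) \<Rightarrow> (real \<Rightarrow> real) \<Rightarrow> (real \<Rightarrow> real) \<Rightarrow> real" where
  "LB_norm2 l b \<psi> = (LINT \<xi>|lborel. l \<xi> / b \<xi> * (cmod (fourier_L2 \<psi> \<xi>))\<^sup>2)"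

definition B_norm2 :: "(real \<Rightarrow> real) \<Rightarrow> (real \<Rightarrow> real) \<Rightarrow> real" where
  "B_norm2 b \<psi> = (LINT \<xi>|lborel. (cmod (fourier_L2 \<psi> \<xi>))\<^sup>2 / b \<xi>)"

definition Ic :: "(real \<Rightarrow> real) \<Rightarrow> (real \<Rightarrow> real) \<Rightarrow> real \<Rightarrow> (real \<Rightarrow> real) \<Rightarrow> real" where
  "Ic l b c \<psi> = LB_norm2 l b \<psi> / 2 - c\<^sup>2 / 2 * B_norm2 b \<psi>"

definition Qf :: "real \<Rightarrow> (real \<Rightarrow> real) \<Rightarrow> real" where
  "Qf p \<psi> = (LINT x|lborel. \<bar>\<psi> x\<bar> powr (p + 1))"

definition m1 :: "(real \<Rightarrow> real) \<Rightarrow> (real \<Rightarrow> real) \<Rightarrow> real \<Rightarrow> real \<Rightarrow> real \<Rightarrow> real \<Rightarrow> real" where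
  "m1 l b r \<rho> p c = Inf {Ic l b c \<psi> | \<psi>. \<psi> \<in> sobolev ((r + \<rho>) / 2) \<and> Qf p \<psi> = 1}"

definition Xspace :: "real \<Rightarrow> real \<Rightarrow> ((real \<Rightarrow> real) \<times> (real \<Rightarrow> real)) set" where
  "Xspace r \<rho> = sobolev ((r + \<rho>) / 2) \<times> sobolev ((r + \<rho>) / 2 - \<rho> / 2)"

definition Ef :: "(real \<Rightarrow> real) \<Rightarrow> (real \<Rightarrow> real) \<Rightarrow> real \<Rightarrow>
                  (real \<Rightarrow> real) \<times> (real \<Rightarrow> real) \<Rightarrow> real" where
  "Ef l b p U = B_norm2 b (snd U) / 2 + LB_norm2 l b (fst U) / 2
                 - Qf p (fst U) / (p + 1)"

text \<open>M(U) = integral of (B^{-1/2}u)(B^{-1/2}w), via Parseval.\<close>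
definition Mf :: "(real \<Rightarrow> real) \<Rightarrow> (real \<Rightarrow> real) \<times> (real \<Rightarrow> real) \<Rightarrow> real" where
  "Mf b U = (LINT \<xi>|lborel.
      Re (fourier_L2 (fst U) \<xi> * cnj (fourier_L2 (snd U) \<xi>)) / b \<xi>)"

definition Gc :: "(real \<Rightarrow> real) \<Rightarrow> (real \<Rightarrow> real) \<Rightarrow> real \<Rightarrow> real \<Rightarrow> real \<Rightarrow> real \<Rightarrow>
                  (real \<Rightarrow> real) set" where
  "Gc l b r \<rho> p c = {(\<lambda>x. (2 * m1 l b r \<rho> p c) powr (1 / (p - 1)) * \<psi> x) | \<psi>.
       \<psi> \<in> sobolev ((r + \<rho>) / 2) \<and> Qf p \<psi> = 1 \<and> Ic l b c \<psi> = m1 l b r \<rho> p c}"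

definition GGc :: "(real \<Rightarrow> real) \<Rightarrow> (real \<Rightarrow> real) \<Rightarrow> real \<Rightarrow> real \<Rightarrow> real \<Rightarrow> real \<Rightarrow>
                  ((real \<Rightarrow> real) \<times> (real \<Rightarrow> real)) set" where
  "GGc l b r \<rho> p c = {(\<phi>, \<lambda>x. - c * \<phi> x) | \<phi>. \<phi> \<in> Gc l b r \<rho> p c}"

end

theory Submission
  imports Defs
begin


lemma cis_vderiv:
  fixes t :: real assumes "t \<noteq> 0"
  shows "((\<lambda>x. - \<i> * cis (t * x) / complex_of_real t) has_vector_derivative cis (t * x)) (at x within S)"
proof -
  have "((\<lambda>x. cis (t * x)) has_vector_derivative (complex_of_real t * (\<i> * cis (t * x)))) (at x within S)"
    unfolding has_vector_derivative_def
    by (auto intro!: derivative_eq_intros simp: algebra_simps scaleR_conv_of_real)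
  then have "((\<lambda>x. (- \<i> / complex_of_real t) * cis (t * x)) has_vector_derivative
        ((- \<i> / complex_of_real t) * (complex_of_real t * (\<i> * cis (t * x))))) (at x within S)"
    by (rule has_vector_derivative_mult_right)
  moreover have "(- \<i> / complex_of_real t) * (complex_of_real t * (\<i> * cis (t * x))) = cis (t * x)"
    using assms by (simp add: field_simps)
  ultimately show ?thesis by (simp add: field_simps)
qed

lemma orth_cis:
  fixes a :: real and m :: int assumes a: "a > 0"
  shows "(LINT x|lborel. indicator {-a..a} x *\<^sub>R cis (pi / a * m * x)) = (if m = 0 then complex_of_real (2*a) else 0)"
proof (cases "m = 0")
  case True
  have "(LINT x|lborel. indicator {-a..a} x *\<^sub>R (1::complex)) = complex_of_real (measure lborel {-a..a})"
    by (simp add: integral_indicator scaleR_conv_of_real)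
  then show ?thesis using True a by (simp add: scaleR_conv_of_real)
next
  case False
  define t where "t = pi / a * m"
  have t: "t \<noteq> 0" using False a by (simp add: t_def)
  have "(LBINT x=-a..a. cis (t * x)) = (- \<i> * cis (t * a) / complex_of_real t) - (- \<i> * cis (t * (-a)) / complex_of_real t)"
    apply (rule interval_integral_FTC_finite)
     apply (intro continuous_intros)
    by (rule cis_vderiv[OF t])
  also have "cis (t * a) = cis (t * (-a))"
  proof -
    have "t * a = pi * m" using a by (simp add: t_def)
    then show ?thesis by (simp add: cis.ctr complex_eq_iff)
  qed
  finally have "(LBINT x=-a..a. cis (t * x)) = 0" by simp
  then show ?thesis using a False
    by (simp add: interval_integral_Icc set_lebesgue_integral_def t_def mult.assoc)
qed



definition ftr :: "(real \<Rightarrow> real) \<Rightarrow> real \<Rightarrow> complex" where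
  "ftr g \<theta> = (LINT x|lborel. complex_of_real (g x) * cis (-(x*\<theta>)))"

lemma int_ind_Icc[simp]: "integrable lborel (indicator {a..b::real} :: real \<Rightarrow> real)"
  by (rule integrable_real_indicator) (auto simp: emeasure_lborel_Icc_eq)

lemma L1_of_supp:
  fixes g :: "real \<Rightarrow> real"
  assumes gm: "g \<in> borel_measurable lborel" and g2: "integrable lborel (\<lambda>x. (g x)\<^sup>2)"
    and gz: "\<And>x. x \<notin> {-a..a} \<Longrightarrow> g x = 0"
  shows "integrable lborel g"
proof (rule Bochner_Integration.integrable_bound[of lborel "\<lambda>x. indicator {-a..a} x + (g x)\<^sup>2"])
  show "integrable lborel (\<lambda>x. indicator {-a..a} x + (g x)\<^sup>2)"
    using g2 by (intro Bochner_Integration.integrable_add) auto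
  show "AE x in lborel. norm (g x) \<le> norm (indicator {- a..a} x + (g x)\<^sup>2)"
  proof (intro AE_I2)
    fix x
    show "norm (g x) \<le> norm (indicator {- a..a} x + (g x)\<^sup>2)"
    proof (cases "x \<in> {-a..a}")
      case True
      have "\<bar>g x\<bar> \<le> 1 + (g x)\<^sup>2"
      proof -
        have "0 \<le> (\<bar>g x\<bar> - 1)\<^sup>2" by simp
        then have "2 * \<bar>g x\<bar> \<le> \<bar>g x\<bar>\<^sup>2 + 1" by (simp add: power2_eq_square algebra_simps)
        then show ?thesis by simp
      qed
      then show ?thesis using True by simp
    next
      case False then show ?thesis using gz by simp
    qed
  qed
qed (use gm in auto)

lemma integrable_g_times:
  fixes g :: "real \<Rightarrow> real" and e :: "real \<Rightarrow> complex"
  assumes g: "integrable lborel g" and em: "e \<in> borel_measurable lborel" and e1: "\<And>x. cmod (e x) \<le> 1"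
  shows "integrable lborel (\<lambda>x. complex_of_real (g x) * e x)"
proof (rule Bochner_Integration.integrable_bound[of lborel "\<lambda>x. g x"])
  show "integrable lborel g" by fact
  show "(\<lambda>x. complex_of_real (g x) * e x) \<in> borel_measurable lborel"
    using g em by measurable
  show "AE x in lborel. norm (complex_of_real (g x) * e x) \<le> norm (g x)"
  proof (intro AE_I2)
    fix x show "norm (complex_of_real (g x) * e x) \<le> norm (g x)"
      using e1[of x] by (simp add: norm_mult mult_left_le abs_ge_zero)
  qed
qed

lemma cmc: "z * cnj z = complex_of_real ((cmod z)\<^sup>2)"
  by (rule complex_norm_square[symmetric])

lemma cis_meas[measurable]: "(\<lambda>x. cis (t * x)) \<in> borel_measurable borel"
  by (intro borel_measurable_continuous_onI continuous_intros)

lemma cnj_ftr: "cnj (ftr g \<theta>) = (LINT x|lborel. complex_of_real (g x) * cis (x*\<theta>))"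
  unfolding ftr_def by (subst Bochner_Integration.integral_cnj[symmetric]) (simp add: cis_cnj)

lemma integrable_ind_cis:
  "integrable lborel (\<lambda>x. indicator {a..b::real} x *\<^sub>R cis (t * x))"
  by (rule borel_integrable_compact) (auto intro!: continuous_intros)

lemma integral_double_sum:
  fixes f :: "'i \<Rightarrow> 'j \<Rightarrow> 'a \<Rightarrow> 'b::{banach,second_countable_topology}"
  assumes "\<And>k j. integrable M (f k j)"
  shows "(\<integral>x. (\<Sum>k\<in>K. \<Sum>j\<in>J. f k j x) \<partial>M) = (\<Sum>k\<in>K. \<Sum>j\<in>J. \<integral>x. f k j x \<partial>M)"
proof -
  have "(\<integral>x. (\<Sum>k\<in>K. \<Sum>j\<in>J. f k j x) \<partial>M) = (\<Sum>k\<in>K. \<integral>x. (\<Sum>j\<in>J. f k j x) \<partial>M)"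
    by (rule Bochner_Integration.integral_sum) (auto intro!: Bochner_Integration.integrable_sum assms)
  also have "\<dots> = (\<Sum>k\<in>K. \<Sum>j\<in>J. \<integral>x. f k j x \<partial>M)"
    by (intro sum.cong refl Bochner_Integration.integral_sum assms)
  finally show ?thesis .
qed

lemma bessel:
  fixes g :: "real \<Rightarrow> real" and K :: "int set"
  assumes a: "a > 0" and gm: "g \<in> borel_measurable lborel" and g2: "integrable lborel (\<lambda>x. (g x)\<^sup>2)"
    and gz: "\<And>x. x \<notin> {-a..a} \<Longrightarrow> g x = 0" and K: "finite K"
  shows "(\<Sum>k\<in>K. (cmod (ftr g (\<xi> + pi/a * of_int k)))\<^sup>2) \<le> 2*a * (LINT x|lborel. (g x)\<^sup>2)"
proof -
  define \<theta> where "\<theta> k = \<xi> + pi/a * of_int k" for k :: int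
  define c where "c k = ftr g (\<theta> k)" for k
  define s where "s x = (\<Sum>k\<in>K. c k * cis (\<theta> k * x))" for x
  define I where "I = (LINT x|lborel. (g x)\<^sup>2)"
  define S where "S = (\<Sum>k\<in>K. (cmod (c k))\<^sup>2)"
  define W where "W = {-a..a}"
  have g1: "integrable lborel g" using L1_of_supp[OF gm g2 gz] .
  have igc: "integrable lborel (\<lambda>x. complex_of_real (g x) * cis (t * x))" for t
    by (rule integrable_g_times[OF g1]) auto
  have gs: "(LINT x|lborel. complex_of_real (g x) * s x) = complex_of_real S"
  proof -
    have "(LINT x|lborel. complex_of_real (g x) * s x) =
          (LINT x|lborel. (\<Sum>k\<in>K. c k * (complex_of_real (g x) * cis (\<theta> k * x))))"
      unfolding s_def by (simp add: sum_distrib_left algebra_simps)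
    also have "\<dots> = (\<Sum>k\<in>K. (LINT x|lborel. c k * (complex_of_real (g x) * cis (\<theta> k * x))))"
      by (rule Bochner_Integration.integral_sum) (auto intro!: igc)
    also have "\<dots> = (\<Sum>k\<in>K. c k * cnj (c k))"
      unfolding c_def cnj_ftr by (simp add: mult.commute)
    also have "\<dots> = complex_of_real S"
      unfolding S_def cmc by simp
    finally show ?thesis .
  qed
    have e: "cis (\<theta> k * x) * cnj (cis (\<theta> j * x)) = cis (pi / a * of_int (k - j) * x)" for k j x
    proof -
      have "\<theta> k * x + - (\<theta> j * x) = pi / a * of_int (k - j) * x" by (simp add: \<theta>_def algebra_simps)
      then show ?thesis by (simp add: cis_cnj cis_mult)
    qed
    have pw: "indicator W x *\<^sub>R (s x * cnj (s x)) =
       (\<Sum>k\<in>K. \<Sum>j\<in>K. (c k * cnj (c j)) * (indicator W x *\<^sub>R cis (pi / a * of_int (k - j) * x)))" for x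
    proof -
      have "s x * cnj (s x) = (\<Sum>k\<in>K. \<Sum>j\<in>K. (c k * cis (\<theta> k * x)) * cnj (c j * cis (\<theta> j * x)))"
        unfolding s_def cnj_sum sum_product by simp
      also have "\<dots> = (\<Sum>k\<in>K. \<Sum>j\<in>K. (c k * cnj (c j)) * cis (pi / a * of_int (k - j) * x))"
      proof (intro sum.cong refl)
        fix k j
        show "(c k * cis (\<theta> k * x)) * cnj (c j * cis (\<theta> j * x)) = (c k * cnj (c j)) * cis (pi / a * of_int (k - j) * x)"
          unfolding e[symmetric] by (simp add: mult_ac)
      qed
      finally show ?thesis by (simp add: scaleR_sum_right mult_scaleR_right)
    qed
  note pw' = pw
  have ss: "(LINT x|lborel. indicator W x *\<^sub>R (s x * cnj (s x))) = complex_of_real (2*a*S)"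
  proof -
    have "(LINT x|lborel. indicator W x *\<^sub>R (s x * cnj (s x))) =
      (LINT x|lborel. (\<Sum>k\<in>K. \<Sum>j\<in>K. (c k * cnj (c j)) * (indicator W x *\<^sub>R cis (pi / a * of_int (k - j) * x))))"
      by (simp only: pw)
    also have "\<dots> = (\<Sum>k\<in>K. \<Sum>j\<in>K. (LINT x|lborel. (c k * cnj (c j)) * (indicator W x *\<^sub>R cis (pi / a * of_int (k - j) * x))))"
      unfolding W_def
      by (rule integral_double_sum) (intro Bochner_Integration.integrable_mult_right integrable_ind_cis)
    also have "\<dots> = (\<Sum>k\<in>K. \<Sum>j\<in>K. (c k * cnj (c j)) * (if k - j = 0 then complex_of_real (2*a) else 0))"
      unfolding W_def integral_mult_right_zero orth_cis[OF a] by (rule refl)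
    also have "\<dots> = (\<Sum>k\<in>K. (c k * cnj (c k)) * complex_of_real (2*a))"
      using K by (simp add: if_distrib cong: if_cong)
    also have "\<dots> = complex_of_real (2*a*S)"
      unfolding S_def cmc by (simp add: sum_distrib_left sum_distrib_right algebra_simps)
    finally show ?thesis .
  qed
  have ign: "integrable lborel (\<lambda>x. complex_of_real (g x) * s x)"
  proof -
    have "(\<lambda>x. complex_of_real (g x) * s x) = (\<lambda>x. \<Sum>k\<in>K. c k * (complex_of_real (g x) * cis (\<theta> k * x)))"
      unfolding s_def by (simp add: sum_distrib_left algebra_simps)
    then show ?thesis by (simp only:) (intro Bochner_Integration.integrable_sum Bochner_Integration.integrable_mult_right igc)
  qed
  have iss: "integrable lborel (\<lambda>x. indicator W x *\<^sub>R (s x * cnj (s x)))"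
    unfolding pw' by (intro Bochner_Integration.integrable_sum Bochner_Integration.integrable_mult_right integrable_ind_cis[of "-a" a, folded W_def])
  have pid: "indicator W x * (cmod (complex_of_real (g x) - s x / complex_of_real (2*a)))\<^sup>2 =
     (g x)\<^sup>2 - (1/a) * Re (complex_of_real (g x) * s x) + (1/(4*a\<^sup>2)) * Re (indicator W x *\<^sub>R (s x * cnj (s x)))" for x
  proof (cases "x \<in> W")
    case True
    have r: "Re (complex_of_real (g x) - s x / complex_of_real (2*a)) = g x - Re (s x) / (2*a)"
      and i: "Im (complex_of_real (g x) - s x / complex_of_real (2*a)) = - Im (s x) / (2*a)"
      by (simp_all add: Re_divide_of_real Im_divide_of_real)
    have "(g x - Re (s x) / (2*a))\<^sup>2 + (- Im (s x) / (2*a))\<^sup>2 =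
       (g x)\<^sup>2 - (1/a) * (g x * Re (s x)) + (1/(4*a\<^sup>2)) * ((Re (s x))\<^sup>2 + (Im (s x))\<^sup>2)"
      using a by (simp add: power2_eq_square field_simps)
    then show ?thesis using True unfolding cmod_power2 r i by (simp add: cmod_power2[symmetric] power2_eq_square)
  next
    case False
    then have "g x = 0" using gz unfolding W_def by auto
    then show ?thesis using False by simp
  qed
  have "0 \<le> (LINT x|lborel. indicator W x * (cmod (complex_of_real (g x) - s x / complex_of_real (2*a)))\<^sup>2)"
    by (intro integral_nonneg_AE) auto
  also have "\<dots> = (LINT x|lborel. (g x)\<^sup>2 - (1/a) * Re (complex_of_real (g x) * s x) + (1/(4*a\<^sup>2)) * Re (indicator W x *\<^sub>R (s x * cnj (s x))))"
    by (simp only: pid)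
  also have "\<dots> = I - (1/a) * Re (LINT x|lborel. complex_of_real (g x) * s x) + (1/(4*a\<^sup>2)) * Re (LINT x|lborel. indicator W x *\<^sub>R (s x * cnj (s x)))"
  proof -
    have i2: "integrable lborel (\<lambda>x. (1/a) * Re (complex_of_real (g x) * s x))"
      using ign by (intro Bochner_Integration.integrable_mult_right integrable_Re)
    have i3: "integrable lborel (\<lambda>x. (1/(4*a\<^sup>2)) * Re (indicator W x *\<^sub>R (s x * cnj (s x))))"
      using iss by (intro Bochner_Integration.integrable_mult_right integrable_Re)
    show ?thesis
      apply (subst Bochner_Integration.integral_add[OF Bochner_Integration.integrable_diff[OF g2 i2] i3])
      apply (subst Bochner_Integration.integral_diff[OF g2 i2])
      apply (simp only: integral_mult_right_zero integral_Re[OF ign] integral_Re[OF iss] I_def)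
      done
  qed
  also have "\<dots> = I - S / (2*a)"
    unfolding gs ss using a by (simp add: field_simps power2_eq_square)
  finally show ?thesis unfolding I_def[symmetric] using a by (simp add: S_def c_def \<theta>_def field_simps)
qed



lemma cis_meas'[measurable]: "cis \<in> borel_measurable borel"
  by (intro borel_measurable_continuous_onI continuous_intros)

lemma ftr_meas[measurable]:
  fixes g :: "real \<Rightarrow> real"
  assumes [measurable]: "g \<in> borel_measurable lborel"
  shows "ftr g \<in> borel_measurable lborel"
proof -
  have "(\<lambda>\<xi>. LINT x|lborel. complex_of_real (g x) * cis (-(x*\<xi>))) \<in> borel_measurable lborel"
    by (rule lborel.borel_measurable_lebesgue_integral) measurable
  then show ?thesis unfolding ftr_def[abs_def] .
qed

lemma planch_box:
  fixes g :: "real \<Rightarrow> real" and M :: nat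
  assumes a: "a > 0" and gm[measurable]: "g \<in> borel_measurable lborel" and g2: "integrable lborel (\<lambda>x. (g x)\<^sup>2)"
    and gz: "\<And>x. x \<notin> {-a..a} \<Longrightarrow> g x = 0"
  shows "(\<integral>\<^sup>+\<xi>. indicator {-(pi/a)*M..<(pi/a)*M} \<xi> * ennreal ((cmod (ftr g \<xi>))\<^sup>2) \<partial>lborel)
      \<le> ennreal (2*pi * (LINT x|lborel. (g x)\<^sup>2))"
proof -
  define h where "h = pi/a"
  have h: "h > 0" using a by (simp add: h_def)
  define F where "F \<xi> = ennreal ((cmod (ftr g \<xi>))\<^sup>2)" for \<xi>
  have Fm[measurable]: "F \<in> borel_measurable borel" unfolding F_def by measurable
  define K where "K = {-int M..<int M}"
  have K: "finite K" by (simp add: K_def)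
  define I where "I = (LINT x|lborel. (g x)\<^sup>2)"
  have "(\<integral>\<^sup>+\<xi>. indicator {-h*M..<h*M} \<xi> * F \<xi> \<partial>lborel)
      \<le> (\<integral>\<^sup>+\<xi>. (\<Sum>k\<in>K. indicator {h * of_int k..<h * (of_int k + 1)} \<xi> * F \<xi>) \<partial>lborel)"
  proof (rule nn_integral_mono)
    fix \<xi>
    show "indicator {-h*M..<h*M} \<xi> * F \<xi> \<le> (\<Sum>k\<in>K. indicator {h * of_int k..<h * (of_int k + 1)} \<xi> * F \<xi>)"
    proof (cases "\<xi> \<in> {-h*M..<h*M}")
      case False then show ?thesis by simp
    next
      case True
      define k0 where "k0 = floor (\<xi> / h)"
      have k0a: "of_int k0 \<le> \<xi> / h" and k0b: "\<xi> / h < of_int k0 + 1"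
        unfolding k0_def by linarith+
      have "h * k0 \<le> \<xi>" using k0a h by (simp add: field_simps)
      moreover have "\<xi> < h * (k0 + 1)" using k0b h by (simp add: field_simps)
      ultimately have in0: "\<xi> \<in> {h * of_int k0..<h * (of_int k0 + 1)}" by simp
      have "- real M \<le> \<xi> / h" "\<xi> / h < real M" using True h by (auto simp: field_simps)
      then have "of_int (- int M - 1) < (of_int k0 :: real)" "(of_int k0 :: real) < of_int (int M)"
        using k0a k0b by simp_all
      then have "- int M - 1 < k0" "k0 < int M" by (simp_all only: of_int_less_iff)
      then have "k0 \<in> K" unfolding K_def by simp
      have "indicator {h * of_int k0..<h * (of_int k0 + 1)} \<xi> * F \<xi> \<le> (\<Sum>k\<in>K. indicator {h * of_int k..<h * (of_int k + 1)} \<xi> * F \<xi>)"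
        by (rule member_le_sum[OF \<open>k0 \<in> K\<close> _ K]) simp
      then show ?thesis using True in0 by simp
    qed
  qed
  also have "\<dots> = (\<Sum>k\<in>K. \<integral>\<^sup>+\<xi>. indicator {h * of_int k..<h * (of_int k + 1)} \<xi> * F \<xi> \<partial>lborel)"
    by (rule nn_integral_sum) measurable
  also have "\<dots> = (\<Sum>k\<in>K. \<integral>\<^sup>+\<xi>. indicator {0..<h} \<xi> * F (\<xi> + h * of_int k) \<partial>lborel)"
  proof (intro sum.cong refl)
    fix k :: int
    have "(\<integral>\<^sup>+\<xi>. indicator {h * of_int k..<h * (of_int k + 1)} \<xi> * F \<xi> \<partial>lborel)
       = (\<integral>\<^sup>+\<xi>. indicator {h * of_int k..<h * (of_int k + 1)} (h * of_int k + 1 * \<xi>) * F (h * of_int k + 1 * \<xi>) \<partial>lborel)"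
      by (subst nn_integral_real_affine[where c=1 and t="h * of_int k"]) (simp_all, measurable)
    also have "\<dots> = (\<integral>\<^sup>+\<xi>. indicator {0..<h} \<xi> * F (\<xi> + h * of_int k) \<partial>lborel)"
      by (intro nn_integral_cong) (auto simp: indicator_def algebra_simps)
    finally show "(\<integral>\<^sup>+\<xi>. indicator {h * of_int k..<h * (of_int k + 1)} \<xi> * F \<xi> \<partial>lborel) =
      (\<integral>\<^sup>+\<xi>. indicator {0..<h} \<xi> * F (\<xi> + h * of_int k) \<partial>lborel)" .
  qed
  also have "\<dots> = (\<integral>\<^sup>+\<xi>. (\<Sum>k\<in>K. indicator {0..<h} \<xi> * F (\<xi> + h * of_int k)) \<partial>lborel)"
    by (rule nn_integral_sum[symmetric]) measurable
  also have "\<dots> \<le> (\<integral>\<^sup>+\<xi>. indicator {0..<h} \<xi> * ennreal (2*a*I) \<partial>lborel)"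
  proof (rule nn_integral_mono)
    fix \<xi>
    have "(\<Sum>k\<in>K. F (\<xi> + h * of_int k)) = ennreal (\<Sum>k\<in>K. (cmod (ftr g (\<xi> + pi/a * of_int k)))\<^sup>2)"
      unfolding F_def h_def by (subst sum_ennreal) auto
    also have "\<dots> \<le> ennreal (2*a*I)"
      using bessel[OF a gm g2 gz K, of \<xi>] unfolding I_def by (intro ennreal_leI) simp
    finally have "(\<Sum>k\<in>K. F (\<xi> + h * of_int k)) \<le> ennreal (2*a*I)" .
    then show "(\<Sum>k\<in>K. indicator {0..<h} \<xi> * F (\<xi> + h * of_int k)) \<le> indicator {0..<h} \<xi> * ennreal (2*a*I)"
      by (simp add: sum_distrib_left[symmetric] mult_left_mono)
  qed
  also have "\<dots> = ennreal (2*a*I) * ennreal h"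
    by (subst mult.commute) (simp add: nn_integral_cmult_indicator h less_imp_le)
  also have "\<dots> = ennreal (2*pi*I)"
    using a h by (simp add: ennreal_mult'[symmetric] h_def I_def)
  finally show ?thesis unfolding h_def F_def I_def .
qed

lemma planch_ineq:
  fixes g :: "real \<Rightarrow> real"
  assumes a: "a > 0" and gm[measurable]: "g \<in> borel_measurable lborel" and g2: "integrable lborel (\<lambda>x. (g x)\<^sup>2)"
    and gz: "\<And>x. x \<notin> {-a..a} \<Longrightarrow> g x = 0"
  shows "(\<integral>\<^sup>+\<xi>. ennreal ((cmod (ftr g \<xi>))\<^sup>2) \<partial>lborel) \<le> ennreal (2*pi * (LINT x|lborel. (g x)\<^sup>2))"
proof -
  define h where "h = pi/a"
  have h: "h > 0" using a by (simp add: h_def)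
  define F where "F \<xi> = ennreal ((cmod (ftr g \<xi>))\<^sup>2)" for \<xi>
  have Fm[measurable]: "F \<in> borel_measurable borel" unfolding F_def by measurable
  define f where "f M \<xi> = indicator {-h*real M..<h*real M} \<xi> * F \<xi>" for M :: nat and \<xi>
  have inc: "incseq f"
  proof (rule incseq_SucI, rule le_funI)
    fix M \<xi>
    have "{-h*real M..<h*real M} \<subseteq> {-h*real (Suc M)..<h*real (Suc M)}"
      using h by (auto simp: field_simps)
    then show "f M \<xi> \<le> f (Suc M) \<xi>"
      unfolding f_def by (intro mult_right_mono) (auto simp: indicator_def)
  qed
  have fm: "f M \<in> borel_measurable lborel" for M unfolding f_def by measurable
  have lim: "(\<lambda>M. f M \<xi>) \<longlonglongrightarrow> F \<xi>" for \<xi>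
  proof (rule tendsto_eventually)
    obtain N :: nat where N: "\<bar>\<xi>\<bar> / h < real N" using reals_Archimedean2 by blast
    show "\<forall>\<^sub>F M in sequentially. f M \<xi> = F \<xi>"
      unfolding eventually_sequentially
    proof (intro exI allI impI)
      fix M assume "N \<le> M"
      then have "\<bar>\<xi>\<bar> < h * real M" using N h
        by (smt (verit, best) divide_less_eq mult.commute mult_left_mono of_nat_mono)
      then have "\<xi> \<in> {-h*real M..<h*real M}" by auto
      then show "f M \<xi> = F \<xi>" unfolding f_def by simp
    qed
  qed
  have "(\<lambda>M. integral\<^sup>N lborel (f M)) \<longlonglongrightarrow> integral\<^sup>N lborel F"
    by (rule nn_integral_LIMSEQ[OF inc fm lim])
  moreover have "integral\<^sup>N lborel (f M) \<le> ennreal (2*pi * (LINT x|lborel. (g x)\<^sup>2))" for M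
    using planch_box[OF a gm g2 gz, of M] unfolding f_def F_def h_def by simp
  ultimately have "integral\<^sup>N lborel F \<le> ennreal (2*pi * (LINT x|lborel. (g x)\<^sup>2))"
    by (intro LIMSEQ_le_const2) auto
  then show ?thesis unfolding F_def .
qed



lemma sq_tri: "(cmod (a::complex))\<^sup>2 \<le> 2*(cmod (a-b))\<^sup>2 + 2*(cmod b)\<^sup>2"
proof -
  have "cmod a \<le> cmod (a - b) + cmod b" using norm_triangle_ineq[of "a-b" b] by simp
  then have "(cmod a)\<^sup>2 \<le> (cmod (a - b) + cmod b)\<^sup>2" by (simp add: power_mono)
  also have "\<dots> \<le> 2*(cmod (a-b))\<^sup>2 + 2*(cmod b)\<^sup>2"
    using zero_le_power2[of "cmod (a-b) - cmod b"] by (simp add: power2_eq_square algebra_simps)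
  finally show ?thesis .
qed

lemma ae_summable:
  fixes d :: "nat \<Rightarrow> real \<Rightarrow> complex"
  assumes dm[measurable]: "\<And>k. d k \<in> borel_measurable lborel"
    and db: "\<And>k. (\<integral>\<^sup>+\<xi>. ennreal ((cmod (d k \<xi>))\<^sup>2) \<partial>lborel) \<le> ennreal ((1/8)^k)"
  shows "AE \<xi> in lborel. summable (\<lambda>k. cmod (d k \<xi>))"
proof -
  define S where "S \<xi> = (\<Sum>k. ennreal (2^k * (cmod (d k \<xi>))\<^sup>2))" for \<xi>
  have Sm: "S \<in> borel_measurable lborel" unfolding S_def by measurable
  have "integral\<^sup>N lborel S = (\<Sum>k. \<integral>\<^sup>+\<xi>. ennreal (2^k * (cmod (d k \<xi>))\<^sup>2) \<partial>lborel)"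
    unfolding S_def by (rule nn_integral_suminf) measurable
  also have "\<dots> = (\<Sum>k. ennreal (2^k) * \<integral>\<^sup>+\<xi>. ennreal ((cmod (d k \<xi>))\<^sup>2) \<partial>lborel)"
    by (intro suminf_cong) (simp add: ennreal_mult nn_integral_cmult)
  also have "\<dots> \<le> (\<Sum>k. ennreal ((1/4)^k))"
  proof (rule suminf_le)
    fix k
    have "ennreal (2^k) * (\<integral>\<^sup>+\<xi>. ennreal ((cmod (d k \<xi>))\<^sup>2) \<partial>lborel) \<le> ennreal (2^k) * ennreal ((1/8)^k)"
      by (intro mult_left_mono db) simp
    also have "\<dots> = ennreal ((1/4)^k)"
      by (simp add: ennreal_mult[symmetric] power_mult_distrib[symmetric])
    finally show "ennreal (2^k) * (\<integral>\<^sup>+\<xi>. ennreal ((cmod (d k \<xi>))\<^sup>2) \<partial>lborel) \<le> ennreal ((1/4)^k)" .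
  qed auto
  also have "\<dots> = ennreal (\<Sum>k. (1/4::real)^k)"
    by (rule suminf_ennreal2) auto
  also have "\<dots> < \<infinity>" by simp
  finally have "integral\<^sup>N lborel S \<noteq> \<infinity>" by simp
  then have ae: "AE \<xi> in lborel. S \<xi> \<noteq> \<infinity>" by (rule nn_integral_noteq_infinite[OF Sm])
  show ?thesis
  proof (rule AE_mp[OF ae], intro AE_I2 impI)
    fix \<xi> assume fin: "S \<xi> \<noteq> \<infinity>"
    define C where "C = enn2real (S \<xi>)"
    have tk: "2^k * (cmod (d k \<xi>))\<^sup>2 \<le> C" for k
    proof -
      have "ennreal (2^k * (cmod (d k \<xi>))\<^sup>2) = (\<Sum>i\<in>{k}. ennreal (2^i * (cmod (d i \<xi>))\<^sup>2))" by simp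
      also have "\<dots> \<le> S \<xi>" unfolding S_def by (rule sum_le_suminf) auto
      also have "\<dots> = ennreal C" unfolding C_def using fin by (simp add: less_top)
      finally show ?thesis by (subst (asm) ennreal_le_iff) (auto simp: C_def)
    qed
    have C0: "0 \<le> C" unfolding C_def by simp
    have bnd: "cmod (d k \<xi>) \<le> sqrt C * (1 / sqrt 2)^k" for k
    proof -
      have "(cmod (d k \<xi>))\<^sup>2 \<le> C / 2^k" using tk[of k] by (simp add: field_simps)
      then have "cmod (d k \<xi>) \<le> sqrt (C / 2^k)" by (simp add: real_le_rsqrt)
      also have "sqrt (C / 2^k) = sqrt C * (1 / sqrt 2)^k"
        by (simp add: real_sqrt_divide real_sqrt_power power_one_over)
      finally show ?thesis .
    qed
    show "summable (\<lambda>k. cmod (d k \<xi>))"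
    proof (rule summable_comparison_test[where g="\<lambda>k. sqrt C * (1 / sqrt 2)^k"])
      show "\<exists>N. \<forall>n\<ge>N. norm (cmod (d n \<xi>)) \<le> sqrt C * (1 / sqrt 2) ^ n" using bnd by simp
      show "summable (\<lambda>k. sqrt C * (1 / sqrt 2)^k)"
        by (intro summable_mult summable_geometric) simp
    qed
  qed
qed

lemma L2_complete:
  fixes G :: "nat \<Rightarrow> real \<Rightarrow> complex" and \<delta> :: "nat \<Rightarrow> real"
  assumes Gm[measurable]: "\<And>n. G n \<in> borel_measurable lborel"
    and G0: "(\<integral>\<^sup>+\<xi>. ennreal ((cmod (G 0 \<xi>))\<^sup>2) \<partial>lborel) < \<infinity>"
    and cau: "\<And>n m. n \<le> m \<Longrightarrow> (\<integral>\<^sup>+\<xi>. ennreal ((cmod (G m \<xi> - G n \<xi>))\<^sup>2) \<partial>lborel) \<le> ennreal (\<delta> n)"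
    and \<delta>: "\<delta> \<longlonglongrightarrow> 0"
  shows "\<exists>v. v \<in> borel_measurable lborel \<and> integrable lborel (\<lambda>\<xi>. (cmod (v \<xi>))\<^sup>2) \<and>
     (\<lambda>n. \<integral>\<^sup>+\<xi>. ennreal ((cmod (v \<xi> - G n \<xi>))\<^sup>2) \<partial>lborel) \<longlonglongrightarrow> 0"
proof -
  have "\<exists>N. \<forall>n\<ge>N. \<delta> n < (1/8)^k" for k :: nat
  proof -
    have "eventually (\<lambda>n. \<delta> n < (1/8)^k) sequentially"
      using order_tendstoD(2)[OF \<delta>, of "(1/8)^k"] by simp
    then show ?thesis unfolding eventually_sequentially .
  qed
  then obtain N where N: "\<And>k n. N k \<le> n \<Longrightarrow> \<delta> n < (1/8)^k" by metis
  define s where "s = rec_nat (N 0) (\<lambda>k sk. max (max (N (Suc k)) sk) (Suc k))"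
  have s0: "s 0 = N 0" and sS: "s (Suc k) = max (max (N (Suc k)) (s k)) (Suc k)" for k
    by (simp_all add: s_def)
  have sN: "N k \<le> s k" for k by (cases k) (simp_all add: s0 sS)
  have sk: "k \<le> s k" for k by (cases k) (simp_all add: sS)
  have smono: "incseq s" by (rule incseq_SucI) (simp add: sS)
  define d where "d k \<xi> = G (s (Suc k)) \<xi> - G (s k) \<xi>" for k \<xi>
  have dm[measurable]: "d k \<in> borel_measurable lborel" for k unfolding d_def by measurable
  have db: "(\<integral>\<^sup>+\<xi>. ennreal ((cmod (d k \<xi>))\<^sup>2) \<partial>lborel) \<le> ennreal ((1/8)^k)" for k
  proof -
    have "(\<integral>\<^sup>+\<xi>. ennreal ((cmod (d k \<xi>))\<^sup>2) \<partial>lborel) \<le> ennreal (\<delta> (s k))"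
      unfolding d_def by (rule cau) (rule monoD[OF smono], simp)
    also have "\<dots> \<le> ennreal ((1/8)^k)" using N[OF sN[of k]] by (intro ennreal_leI) simp
    finally show ?thesis .
  qed
  have aes: "AE \<xi> in lborel. summable (\<lambda>k. cmod (d k \<xi>))" by (rule ae_summable[OF dm db])
  define v where "v \<xi> = lim (\<lambda>k. G (s k) \<xi>)" for \<xi>
  have vm[measurable]: "v \<in> borel_measurable lborel" unfolding v_def by measurable
  have aec: "AE \<xi> in lborel. (\<lambda>k. G (s k) \<xi>) \<longlonglongrightarrow> v \<xi>"
  proof (rule AE_mp[OF aes], intro AE_I2 impI)
    fix \<xi> assume sm: "summable (\<lambda>k. cmod (d k \<xi>))"
    then have "summable (\<lambda>k. d k \<xi>)" by (rule summable_norm_cancel)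
    then have "(\<lambda>k. \<Sum>j<k. d j \<xi>) \<longlonglongrightarrow> (\<Sum>j. d j \<xi>)" by (rule summable_LIMSEQ)
    then have "(\<lambda>k. G (s 0) \<xi> + (\<Sum>j<k. d j \<xi>)) \<longlonglongrightarrow> G (s 0) \<xi> + (\<Sum>j. d j \<xi>)"
      by (intro tendsto_intros)
    moreover have "G (s 0) \<xi> + (\<Sum>j<k. d j \<xi>) = G (s k) \<xi>" for k
      unfolding d_def
    proof (induction k)
      case (Suc k) then show ?case by (simp add: add.assoc[symmetric])
    qed simp
    ultimately have "convergent (\<lambda>k. G (s k) \<xi>)" unfolding convergent_def by auto
    then show "(\<lambda>k. G (s k) \<xi>) \<longlonglongrightarrow> v \<xi>" unfolding v_def by (rule convergent_LIMSEQ_iff[THEN iffD1])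
  qed
  have bound: "(\<integral>\<^sup>+\<xi>. ennreal ((cmod (v \<xi> - G n \<xi>))\<^sup>2) \<partial>lborel) \<le> ennreal (\<delta> n)" for n
  proof -
    have "(\<integral>\<^sup>+\<xi>. ennreal ((cmod (v \<xi> - G n \<xi>))\<^sup>2) \<partial>lborel) =
        (\<integral>\<^sup>+\<xi>. liminf (\<lambda>k. ennreal ((cmod (G (s k) \<xi> - G n \<xi>))\<^sup>2)) \<partial>lborel)"
    proof (rule nn_integral_cong_AE, rule AE_mp[OF aec], intro AE_I2 impI)
      fix \<xi> assume "(\<lambda>k. G (s k) \<xi>) \<longlonglongrightarrow> v \<xi>"
      then have "(\<lambda>k. ennreal ((cmod (G (s k) \<xi> - G n \<xi>))\<^sup>2)) \<longlonglongrightarrow> ennreal ((cmod (v \<xi> - G n \<xi>))\<^sup>2)"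
        by (intro tendsto_intros)
      then show "ennreal ((cmod (v \<xi> - G n \<xi>))\<^sup>2) = liminf (\<lambda>k. ennreal ((cmod (G (s k) \<xi> - G n \<xi>))\<^sup>2))"
        by (rule lim_imp_Liminf[symmetric, rotated]) simp
    qed
    also have "\<dots> \<le> liminf (\<lambda>k. \<integral>\<^sup>+\<xi>. ennreal ((cmod (G (s k) \<xi> - G n \<xi>))\<^sup>2) \<partial>lborel)"
      by (rule nn_integral_liminf) measurable
    also have "\<dots> \<le> ennreal (\<delta> n)"
    proof (rule Liminf_le)
      show "\<forall>\<^sub>F k in sequentially. (\<integral>\<^sup>+\<xi>. ennreal ((cmod (G (s k) \<xi> - G n \<xi>))\<^sup>2) \<partial>lborel) \<le> ennreal (\<delta> n)"
        unfolding eventually_sequentially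
        by (intro exI[of _ n] allI impI cau) (use sk order_trans in blast)
    qed simp
    finally show ?thesis .
  qed
  have lim0: "(\<lambda>n. \<integral>\<^sup>+\<xi>. ennreal ((cmod (v \<xi> - G n \<xi>))\<^sup>2) \<partial>lborel) \<longlonglongrightarrow> 0"
  proof (rule tendsto_sandwich[where f="\<lambda>n. 0" and h="\<lambda>n. ennreal (\<delta> n)"])
    show "((\<lambda>n. ennreal (\<delta> n)) \<longlongrightarrow> 0) sequentially"
      using tendsto_ennrealI[OF \<delta>] by simp
  qed (use bound in auto)
  have vint: "integrable lborel (\<lambda>\<xi>. (cmod (v \<xi>))\<^sup>2)"
  proof (rule integrableI_bounded)
    show "(\<lambda>\<xi>. (cmod (v \<xi>))\<^sup>2) \<in> borel_measurable lborel" by measurable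
    have "(\<integral>\<^sup>+\<xi>. ennreal (norm ((cmod (v \<xi>))\<^sup>2)) \<partial>lborel)
       \<le> (\<integral>\<^sup>+\<xi>. 2 * ennreal ((cmod (v \<xi> - G 0 \<xi>))\<^sup>2) + 2 * ennreal ((cmod (G 0 \<xi>))\<^sup>2) \<partial>lborel)"
    proof (rule nn_integral_mono)
      fix \<xi>
      have "(cmod (v \<xi>))\<^sup>2 \<le> 2*(cmod (v \<xi> - G 0 \<xi>))\<^sup>2 + 2*(cmod (G 0 \<xi>))\<^sup>2" by (rule sq_tri)
      then have "ennreal ((cmod (v \<xi>))\<^sup>2) \<le> ennreal (2*(cmod (v \<xi> - G 0 \<xi>))\<^sup>2 + 2*(cmod (G 0 \<xi>))\<^sup>2)"
        by (rule ennreal_leI)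
      also have "\<dots> = 2 * ennreal ((cmod (v \<xi> - G 0 \<xi>))\<^sup>2) + 2 * ennreal ((cmod (G 0 \<xi>))\<^sup>2)"
        by (simp add: ennreal_plus ennreal_mult)
      finally show "ennreal (norm ((cmod (v \<xi>))\<^sup>2)) \<le> 2 * ennreal ((cmod (v \<xi> - G 0 \<xi>))\<^sup>2) + 2 * ennreal ((cmod (G 0 \<xi>))\<^sup>2)"
        by simp
    qed
    also have "\<dots> = 2 * (\<integral>\<^sup>+\<xi>. ennreal ((cmod (v \<xi> - G 0 \<xi>))\<^sup>2) \<partial>lborel) + 2 * (\<integral>\<^sup>+\<xi>. ennreal ((cmod (G 0 \<xi>))\<^sup>2) \<partial>lborel)"
      by (simp add: nn_integral_add nn_integral_cmult)
    also have "\<dots> < \<infinity>"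
      using bound[of 0] G0 by (simp add: ennreal_mult_less_top order.strict_trans1)
    finally show "(\<integral>\<^sup>+\<xi>. ennreal (norm ((cmod (v \<xi>))\<^sup>2)) \<partial>lborel) < \<infinity>" .
  qed
  show ?thesis using vm vint lim0 by blast
qed



lemma ft_trunc_eq:
  "ft_trunc u n \<xi> = ftr (\<lambda>x. indicator {-n..n} x * u x) \<xi> / complex_of_real (sqrt (2*pi))"
  unfolding ft_trunc_def ftr_def set_lebesgue_integral_def
  by (simp add: scaleR_conv_of_real mult.assoc)

lemma ftr_diff:
  fixes g1 g2 :: "real \<Rightarrow> real"
  assumes "integrable lborel g1" "integrable lborel g2"
  shows "ftr g1 \<xi> - ftr g2 \<xi> = ftr (\<lambda>x. g1 x - g2 x) \<xi>"
proof -
  have i: "integrable lborel (\<lambda>x. complex_of_real (g x) * cis (-(x*\<xi>)))" if "integrable lborel g" for g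
    using integrable_g_times[OF that, of "\<lambda>x. cis (-(x*\<xi>))"] by (simp add: measurable_compose[OF _ cis_meas'])
  show ?thesis unfolding ftr_def
    by (subst Bochner_Integration.integral_diff[OF i[OF assms(1)] i[OF assms(2)], symmetric])
       (simp add: algebra_simps)
qed

lemma ft_trunc_meas[measurable]:
  assumes [measurable]: "u \<in> borel_measurable lborel"
  shows "ft_trunc u n \<in> borel_measurable lborel"
proof -
  have "(\<lambda>\<xi>. ftr (\<lambda>x. indicator {-n..n} x * u x) \<xi> / complex_of_real (sqrt (2*pi))) \<in> borel_measurable lborel"
    by measurable
  then show ?thesis unfolding ft_trunc_eq[abs_def] .
qed

lemma ft_trunc_L2:
  fixes u :: "real \<Rightarrow> real"
  assumes um[measurable]: "u \<in> borel_measurable lborel" and u2: "integrable lborel (\<lambda>x. (u x)\<^sup>2)"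
    and gm[measurable]: "g \<in> borel_measurable lborel" and gsupp: "\<And>x. x \<notin> {-a..a} \<Longrightarrow> g x = 0"
    and gb: "\<And>x. \<bar>g x\<bar> \<le> \<bar>u x\<bar>" and a: "a > 0"
  shows "(\<integral>\<^sup>+\<xi>. ennreal ((cmod (ftr g \<xi> / complex_of_real (sqrt (2*pi))))\<^sup>2) \<partial>lborel) \<le> ennreal (LINT x|lborel. (g x)\<^sup>2)"
proof -
  have g2: "integrable lborel (\<lambda>x. (g x)\<^sup>2)"
  proof (rule Bochner_Integration.integrable_bound[OF u2])
    show "AE x in lborel. norm ((g x)\<^sup>2) \<le> norm ((u x)\<^sup>2)"
      using gb by (intro AE_I2) (simp add: abs_le_square_iff[symmetric])
  qed measurable
  have "(\<integral>\<^sup>+\<xi>. ennreal ((cmod (ftr g \<xi> / complex_of_real (sqrt (2*pi))))\<^sup>2) \<partial>lborel)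
      = (\<integral>\<^sup>+\<xi>. ennreal (1/(2*pi)) * ennreal ((cmod (ftr g \<xi>))\<^sup>2) \<partial>lborel)"
    by (intro nn_integral_cong) (simp add: norm_divide power_divide ennreal_mult[symmetric])
  also have "\<dots> = ennreal (1/(2*pi)) * (\<integral>\<^sup>+\<xi>. ennreal ((cmod (ftr g \<xi>))\<^sup>2) \<partial>lborel)"
    by (rule nn_integral_cmult) measurable
  also have "\<dots> \<le> ennreal (1/(2*pi)) * ennreal (2*pi * (LINT x|lborel. (g x)\<^sup>2))"
    by (intro mult_left_mono planch_ineq[OF a gm g2 gsupp] zero_le)
  also have "\<dots> = ennreal (LINT x|lborel. (g x)\<^sup>2)"
    by (simp add: ennreal_mult[symmetric] integral_nonneg_AE)
  finally show ?thesis .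
qed

lemma ind_u_int:
  fixes u :: "real \<Rightarrow> real"
  assumes um[measurable]: "u \<in> borel_measurable lborel" and u2: "integrable lborel (\<lambda>x. (u x)\<^sup>2)"
    and gm[measurable]: "g \<in> borel_measurable lborel" and gb: "\<And>x. \<bar>g x\<bar> \<le> \<bar>u x\<bar>"
  shows "integrable lborel (\<lambda>x. (g x)\<^sup>2)"
proof (rule Bochner_Integration.integrable_bound[OF u2])
  show "AE x in lborel. norm ((g x)\<^sup>2) \<le> norm ((u x)\<^sup>2)"
    using gb by (intro AE_I2) (simp add: abs_le_square_iff[symmetric])
qed measurable

lemma ft_exists:
  fixes u :: "real \<Rightarrow> real"
  assumes um[measurable]: "u \<in> borel_measurable lborel" and u2: "integrable lborel (\<lambda>x. (u x)\<^sup>2)"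
  shows "\<exists>v. is_fourier_L2 u v"
proof -
  define G where "G n = ft_trunc u (real n)" for n
  define \<delta> where "\<delta> n = (LINT x|lborel. indicator (- {-real n..real n}) x * (u x)\<^sup>2)" for n
  have Gm: "G n \<in> borel_measurable lborel" for n unfolding G_def by measurable
  have iu: "integrable lborel (\<lambda>x. indicator {-b..b} x * u x)" for b :: real
  proof (rule L1_of_supp[where a=b])
    show "integrable lborel (\<lambda>x. (indicator {-b..b} x * u x)\<^sup>2)"
      by (rule ind_u_int[OF um u2]) (auto simp: indicator_def)
  qed auto
  have G0: "(\<integral>\<^sup>+\<xi>. ennreal ((cmod (G 0 \<xi>))\<^sup>2) \<partial>lborel) < \<infinity>"
  proof -
    have "(\<integral>\<^sup>+\<xi>. ennreal ((cmod (G 0 \<xi>))\<^sup>2) \<partial>lborel) \<le> ennreal (LINT x|lborel. (indicator {-real 0..real 0} x * u x)\<^sup>2)"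
      unfolding G_def ft_trunc_eq
      by (rule ft_trunc_L2[OF um u2, where a=1 and g="\<lambda>x. indicator {-real 0..real 0} x * u x"]) (auto simp: indicator_def)
    also have "\<dots> < \<infinity>" by simp
    finally show ?thesis .
  qed
  have cau: "(\<integral>\<^sup>+\<xi>. ennreal ((cmod (G m \<xi> - G n \<xi>))\<^sup>2) \<partial>lborel) \<le> ennreal (\<delta> n)" if nm: "n \<le> m" for n m
  proof -
    define g where "g x = indicator {-real m..real m} x * u x - indicator {-real n..real n} x * u x" for x
    have gm[measurable]: "g \<in> borel_measurable lborel" unfolding g_def by measurable
    have gb: "\<bar>g x\<bar> \<le> \<bar>u x\<bar>" for x using nm unfolding g_def by (auto simp: indicator_def)
    have eq: "G m \<xi> - G n \<xi> = ftr g \<xi> / complex_of_real (sqrt (2*pi))" for \<xi>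
      unfolding G_def ft_trunc_eq g_def
      by (simp add: diff_divide_distrib[symmetric] ftr_diff[OF iu iu])
    have "(\<integral>\<^sup>+\<xi>. ennreal ((cmod (G m \<xi> - G n \<xi>))\<^sup>2) \<partial>lborel) \<le> ennreal (LINT x|lborel. (g x)\<^sup>2)"
      unfolding eq
      by (rule ft_trunc_L2[OF um u2 gm _ gb, where a="real m + 1"]) (use nm in \<open>auto simp: g_def indicator_def\<close>)
    also have "\<dots> \<le> ennreal (\<delta> n)"
    proof (rule ennreal_leI)
      show "(LINT x|lborel. (g x)\<^sup>2) \<le> \<delta> n"
        unfolding \<delta>_def
      proof (rule integral_mono)
        show "integrable lborel (\<lambda>x. (g x)\<^sup>2)" by (rule ind_u_int[OF um u2 gm gb])
        show "integrable lborel (\<lambda>x. indicator (- {-real n..real n}) x * (u x)\<^sup>2)"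
          by (rule Bochner_Integration.integrable_bound[OF u2]) (auto simp: indicator_def)
        fix x
        show "(g x)\<^sup>2 \<le> indicator (- {-real n..real n}) x * (u x)\<^sup>2"
          using nm by (auto simp: g_def indicator_def)
      qed
    qed
    finally show ?thesis .
  qed
  have \<delta>: "\<delta> \<longlonglongrightarrow> 0"
  proof -
    have "(\<lambda>n. LINT x|lborel. indicator (- {-real n..real n}) x * (u x)\<^sup>2) \<longlonglongrightarrow> integral\<^sup>L lborel (\<lambda>x::real. 0::real)"
    proof (rule Bochner_Integration.integral_dominated_convergence[where w="\<lambda>x. (u x)\<^sup>2"])
      show "AE x in lborel. (\<lambda>n. indicator (- {-real n..real n}) x * (u x)\<^sup>2) \<longlonglongrightarrow> 0"
      proof (intro AE_I2 tendsto_eventually)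
        fix x :: real
        obtain N :: nat where "\<bar>x\<bar> \<le> real N" using real_arch_simple by blast
        then show "\<forall>\<^sub>F n in sequentially. indicator (- {-real n..real n}) x * (u x)\<^sup>2 = 0"
          unfolding eventually_sequentially by (intro exI[of _ N]) (auto simp: indicator_def)
      qed
      show "\<And>i. AE x in lborel. norm (indicator (- {-real i..real i}) x * (u x)\<^sup>2) \<le> (u x)\<^sup>2"
        by (intro AE_I2) (auto simp: indicator_def)
    qed (use u2 in auto)
    then show ?thesis unfolding \<delta>_def by simp
  qed
  obtain v where "v \<in> borel_measurable lborel" "integrable lborel (\<lambda>\<xi>. (cmod (v \<xi>))\<^sup>2)"
     "(\<lambda>n. \<integral>\<^sup>+\<xi>. ennreal ((cmod (v \<xi> - G n \<xi>))\<^sup>2) \<partial>lborel) \<longlonglongrightarrow> 0"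
    using L2_complete[OF Gm G0 cau \<delta>] by blast
  then have "is_fourier_L2 u v" unfolding is_fourier_L2_def G_def by simp
  then show ?thesis by blast
qed



lemma sq_tri2: "(cmod ((x::complex) - y))\<^sup>2 \<le> 2*(cmod x)\<^sup>2 + 2*(cmod y)\<^sup>2"
  using sq_tri[of "x - y" "-y"] by simp

lemma ft_unique:
  assumes um[measurable]: "u \<in> borel_measurable lborel" and h1: "is_fourier_L2 u v1" and h2: "is_fourier_L2 u v2"
  shows "AE \<xi> in lborel. v1 \<xi> = v2 \<xi>"
proof -
  have m1[measurable]: "v1 \<in> borel_measurable lborel" and m2[measurable]: "v2 \<in> borel_measurable lborel"
    using h1 h2 unfolding is_fourier_L2_def by auto
  define G where "G n = ft_trunc u (real n)" for n
  define A where "A n = (\<integral>\<^sup>+\<xi>. ennreal ((cmod (v1 \<xi> - G n \<xi>))\<^sup>2) \<partial>lborel)" for n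
  define B where "B n = (\<integral>\<^sup>+\<xi>. ennreal ((cmod (v2 \<xi> - G n \<xi>))\<^sup>2) \<partial>lborel)" for n
  have A: "A \<longlonglongrightarrow> 0" and B: "B \<longlonglongrightarrow> 0"
    using h1 h2 unfolding is_fourier_L2_def A_def B_def G_def by auto
  have "(\<lambda>n. 2 * A n + 2 * B n) \<longlonglongrightarrow> 2 * 0 + 2 * 0"
    by (intro tendsto_add ennreal_tendsto_cmult A B) auto
  then have AB: "(\<lambda>n. 2 * A n + 2 * B n) \<longlonglongrightarrow> 0" by simp
  have le: "(\<integral>\<^sup>+\<xi>. ennreal ((cmod (v1 \<xi> - v2 \<xi>))\<^sup>2) \<partial>lborel) \<le> 2 * A n + 2 * B n" for n
  proof -
    have Gm[measurable]: "G n \<in> borel_measurable lborel"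
      unfolding G_def by measurable
    have "(\<integral>\<^sup>+\<xi>. ennreal ((cmod (v1 \<xi> - v2 \<xi>))\<^sup>2) \<partial>lborel)
        \<le> (\<integral>\<^sup>+\<xi>. 2 * ennreal ((cmod (v1 \<xi> - G n \<xi>))\<^sup>2) + 2 * ennreal ((cmod (v2 \<xi> - G n \<xi>))\<^sup>2) \<partial>lborel)"
    proof (rule nn_integral_mono)
      fix \<xi>
      have "(cmod (v1 \<xi> - v2 \<xi>))\<^sup>2 \<le> 2*(cmod (v1 \<xi> - G n \<xi>))\<^sup>2 + 2*(cmod (v2 \<xi> - G n \<xi>))\<^sup>2"
        using sq_tri2[of "v1 \<xi> - G n \<xi>" "v2 \<xi> - G n \<xi>"] by simp
      then have "ennreal ((cmod (v1 \<xi> - v2 \<xi>))\<^sup>2) \<le> ennreal (2*(cmod (v1 \<xi> - G n \<xi>))\<^sup>2 + 2*(cmod (v2 \<xi> - G n \<xi>))\<^sup>2)"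
        by (rule ennreal_leI)
      then show "ennreal ((cmod (v1 \<xi> - v2 \<xi>))\<^sup>2) \<le> 2 * ennreal ((cmod (v1 \<xi> - G n \<xi>))\<^sup>2) + 2 * ennreal ((cmod (v2 \<xi> - G n \<xi>))\<^sup>2)"
        by (simp add: ennreal_plus ennreal_mult)
    qed
    also have "\<dots> = 2 * A n + 2 * B n"
      unfolding A_def B_def by (simp add: nn_integral_add nn_integral_cmult)
    finally show ?thesis .
  qed
  have "(\<integral>\<^sup>+\<xi>. ennreal ((cmod (v1 \<xi> - v2 \<xi>))\<^sup>2) \<partial>lborel) \<le> 0"
    by (rule LIMSEQ_le_const[OF AB]) (use le in auto)
  then have "(\<integral>\<^sup>+\<xi>. ennreal ((cmod (v1 \<xi> - v2 \<xi>))\<^sup>2) \<partial>lborel) = 0" by simp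
  then have "AE \<xi> in lborel. ennreal ((cmod (v1 \<xi> - v2 \<xi>))\<^sup>2) = 0"
    by (subst (asm) nn_integral_0_iff_AE) auto
  then show ?thesis by eventually_elim simp
qed

lemma ft_trunc_scale: "ft_trunc (\<lambda>x. c * u x) n \<xi> = complex_of_real c * ft_trunc u n \<xi>"
proof -
  have "(LINT x:{-n..n}|lborel. complex_of_real (c * u x) * cis (- (x * \<xi>)))
      = (LINT x|lborel. complex_of_real c * (indicator {-n..n} x *\<^sub>R (complex_of_real (u x) * cis (- (x * \<xi>)))))"
    unfolding set_lebesgue_integral_def by (simp add: scaleR_conv_of_real mult_ac)
  also have "\<dots> = complex_of_real c * (LINT x:{-n..n}|lborel. complex_of_real (u x) * cis (- (x * \<xi>)))"
    unfolding set_lebesgue_integral_def by (rule integral_mult_right_zero)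
  finally show ?thesis unfolding ft_trunc_def by simp
qed

lemma ft_scale:
  assumes um[measurable]: "u \<in> borel_measurable lborel" and h: "is_fourier_L2 u v"
  shows "is_fourier_L2 (\<lambda>x. c * u x) (\<lambda>\<xi>. complex_of_real c * v \<xi>)"
proof -
  have vm[measurable]: "v \<in> borel_measurable lborel" and vi: "integrable lborel (\<lambda>\<xi>. (cmod (v \<xi>))\<^sup>2)"
    and vl: "(\<lambda>n. \<integral>\<^sup>+\<xi>. ennreal ((cmod (v \<xi> - ft_trunc u (real n) \<xi>))\<^sup>2) \<partial>lborel) \<longlonglongrightarrow> 0"
    using h unfolding is_fourier_L2_def by auto
  have "integrable lborel (\<lambda>\<xi>. c\<^sup>2 * (cmod (v \<xi>))\<^sup>2)"
    using vi by (rule Bochner_Integration.integrable_mult_right)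
  then have i2: "integrable lborel (\<lambda>\<xi>. (cmod (complex_of_real c * v \<xi>))\<^sup>2)"
    by (simp add: norm_mult power_mult_distrib)
  have eq: "(\<integral>\<^sup>+\<xi>. ennreal ((cmod (complex_of_real c * v \<xi> - ft_trunc (\<lambda>x. c * u x) (real n) \<xi>))\<^sup>2) \<partial>lborel)
     = ennreal (c\<^sup>2) * (\<integral>\<^sup>+\<xi>. ennreal ((cmod (v \<xi> - ft_trunc u (real n) \<xi>))\<^sup>2) \<partial>lborel)" for n
  proof -
    have "(\<integral>\<^sup>+\<xi>. ennreal ((cmod (complex_of_real c * v \<xi> - ft_trunc (\<lambda>x. c * u x) (real n) \<xi>))\<^sup>2) \<partial>lborel)
      = (\<integral>\<^sup>+\<xi>. ennreal (c\<^sup>2) * ennreal ((cmod (v \<xi> - ft_trunc u (real n) \<xi>))\<^sup>2) \<partial>lborel)"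
    proof (rule nn_integral_cong)
      fix \<xi>
      have "complex_of_real c * v \<xi> - ft_trunc (\<lambda>x. c * u x) (real n) \<xi> = complex_of_real c * (v \<xi> - ft_trunc u (real n) \<xi>)"
        unfolding ft_trunc_scale by (simp add: algebra_simps)
      then show "ennreal ((cmod (complex_of_real c * v \<xi> - ft_trunc (\<lambda>x. c * u x) (real n) \<xi>))\<^sup>2) =
          ennreal (c\<^sup>2) * ennreal ((cmod (v \<xi> - ft_trunc u (real n) \<xi>))\<^sup>2)"
        by (simp add: norm_mult power_mult_distrib ennreal_mult)
    qed
    also have "\<dots> = ennreal (c\<^sup>2) * (\<integral>\<^sup>+\<xi>. ennreal ((cmod (v \<xi> - ft_trunc u (real n) \<xi>))\<^sup>2) \<partial>lborel)"
      by (rule nn_integral_cmult) measurable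
    finally show ?thesis .
  qed
  have "(\<lambda>n. ennreal (c\<^sup>2) * (\<integral>\<^sup>+\<xi>. ennreal ((cmod (v \<xi> - ft_trunc u (real n) \<xi>))\<^sup>2) \<partial>lborel)) \<longlonglongrightarrow> ennreal (c\<^sup>2) * 0"
    by (intro ennreal_tendsto_cmult vl) simp
  then have "(\<lambda>n. \<integral>\<^sup>+\<xi>. ennreal ((cmod (complex_of_real c * v \<xi> - ft_trunc (\<lambda>x. c * u x) (real n) \<xi>))\<^sup>2) \<partial>lborel) \<longlonglongrightarrow> 0"
    unfolding eq by simp
  then show ?thesis unfolding is_fourier_L2_def using i2 by simp
qed



lemma fourier_good:
  assumes "u \<in> borel_measurable lborel" "integrable lborel (\<lambda>x. (u x)\<^sup>2)"
  shows "is_fourier_L2 u (fourier_L2 u)"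
  unfolding fourier_L2_def using ft_exists[OF assms] by (rule someI_ex)

lemma fourier_meas:
  assumes "u \<in> borel_measurable lborel" "integrable lborel (\<lambda>x. (u x)\<^sup>2)"
  shows "fourier_L2 u \<in> borel_measurable lborel"
  using fourier_good[OF assms] unfolding is_fourier_L2_def by simp

lemma sq_scale_int:
  fixes u :: "real \<Rightarrow> real" and t :: real
  assumes "integrable lborel (\<lambda>x. (u x)\<^sup>2)"
  shows "integrable lborel (\<lambda>x. (t * u x)\<^sup>2)"
proof -
  have "integrable lborel (\<lambda>x. t\<^sup>2 * (u x)\<^sup>2)" using assms by (rule Bochner_Integration.integrable_mult_right)
  then show ?thesis by (simp add: power_mult_distrib)
qed

lemma fourier_scale_ae:
  assumes um[measurable]: "u \<in> borel_measurable lborel" and u2: "integrable lborel (\<lambda>x. (u x)\<^sup>2)"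
  shows "AE \<xi> in lborel. fourier_L2 (\<lambda>x. t * u x) \<xi> = complex_of_real t * fourier_L2 u \<xi>"
proof -
  have m[measurable]: "(\<lambda>x. t * u x) \<in> borel_measurable lborel" by measurable
  show ?thesis
    by (rule ft_unique[OF m fourier_good[OF m sq_scale_int[OF u2]] ft_scale[OF um fourier_good[OF um u2]]])
qed

lemma sob_D:
  assumes "u \<in> sobolev s"
  shows "u \<in> borel_measurable lborel" "integrable lborel (\<lambda>x. (u x)\<^sup>2)"
    "integrable lborel (\<lambda>\<xi>. (1 + \<xi>\<^sup>2) powr s * (cmod (fourier_L2 u \<xi>))\<^sup>2)"
    "fourier_L2 u \<in> borel_measurable lborel"
  using assms fourier_meas[of u] unfolding sobolev_def by auto

lemma weighted_int:
  assumes u: "u \<in> sobolev s" and fm: "f \<in> borel_measurable lborel"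
    and fb: "\<And>\<xi>. \<bar>f \<xi>\<bar> \<le> C * (1 + \<xi>\<^sup>2) powr s"
  shows "integrable lborel (\<lambda>\<xi>. f \<xi> * (cmod (fourier_L2 u \<xi>))\<^sup>2)"
proof (rule Bochner_Integration.integrable_bound[of _ "\<lambda>\<xi>. C * ((1 + \<xi>\<^sup>2) powr s * (cmod (fourier_L2 u \<xi>))\<^sup>2)"])
  show "integrable lborel (\<lambda>\<xi>. C * ((1 + \<xi>\<^sup>2) powr s * (cmod (fourier_L2 u \<xi>))\<^sup>2))"
    using sob_D(3)[OF u] by (rule Bochner_Integration.integrable_mult_right)
  have [measurable]: "fourier_L2 u \<in> borel_measurable lborel" using sob_D(4)[OF u] .
  show "(\<lambda>\<xi>. f \<xi> * (cmod (fourier_L2 u \<xi>))\<^sup>2) \<in> borel_measurable lborel" using fm by measurable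
  show "AE \<xi> in lborel. norm (f \<xi> * (cmod (fourier_L2 u \<xi>))\<^sup>2) \<le> norm (C * ((1 + \<xi>\<^sup>2) powr s * (cmod (fourier_L2 u \<xi>))\<^sup>2))"
  proof (intro AE_I2)
    fix \<xi>
    have "\<bar>f \<xi>\<bar> * (cmod (fourier_L2 u \<xi>))\<^sup>2 \<le> C * (1 + \<xi>\<^sup>2) powr s * (cmod (fourier_L2 u \<xi>))\<^sup>2"
      by (intro mult_right_mono fb) simp
    also have "\<dots> \<le> \<bar>C * ((1 + \<xi>\<^sup>2) powr s * (cmod (fourier_L2 u \<xi>))\<^sup>2)\<bar>" by (simp add: mult_ac)
    finally show "norm (f \<xi> * (cmod (fourier_L2 u \<xi>))\<^sup>2) \<le> norm (C * ((1 + \<xi>\<^sup>2) powr s * (cmod (fourier_L2 u \<xi>))\<^sup>2))"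
      by (simp add: abs_mult)
  qed
qed

lemma sob_scale:
  assumes u: "u \<in> sobolev s"
  shows "(\<lambda>x. t * u x) \<in> sobolev s"
proof -
  note um[measurable] = sob_D(1)[OF u] and u2 = sob_D(2)[OF u]
  have tm[measurable]: "(\<lambda>x. t * u x) \<in> borel_measurable lborel" by measurable
  have t2: "integrable lborel (\<lambda>x. (t * u x)\<^sup>2)" by (rule sq_scale_int[OF u2])
  have [measurable]: "fourier_L2 (\<lambda>x. t * u x) \<in> borel_measurable lborel" by (rule fourier_meas[OF tm t2])
  have [measurable]: "fourier_L2 u \<in> borel_measurable lborel" by (rule fourier_meas[OF um u2])
  have ig: "integrable lborel (\<lambda>\<xi>. t\<^sup>2 * ((1 + \<xi>\<^sup>2) powr s * (cmod (fourier_L2 u \<xi>))\<^sup>2))"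
    using sob_D(3)[OF u] by (rule Bochner_Integration.integrable_mult_right)
  have ae: "AE \<xi> in lborel. t\<^sup>2 * ((1 + \<xi>\<^sup>2) powr s * (cmod (fourier_L2 u \<xi>))\<^sup>2) =
        (1 + \<xi>\<^sup>2) powr s * (cmod (fourier_L2 (\<lambda>x. t * u x) \<xi>))\<^sup>2"
    using fourier_scale_ae[OF um u2, of t] by eventually_elim (simp add: norm_mult power_mult_distrib)
  have "integrable lborel (\<lambda>\<xi>. (1 + \<xi>\<^sup>2) powr s * (cmod (fourier_L2 (\<lambda>x. t * u x) \<xi>))\<^sup>2)"
    by (rule integrable_cong_AE_imp[OF ig _ ae]) measurable
  then show ?thesis unfolding sobolev_def using tm t2 by simp
qed

lemma sob_mono:
  assumes u: "u \<in> sobolev s" and ss: "s' \<le> s"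
  shows "u \<in> sobolev s'"
proof -
  have "integrable lborel (\<lambda>\<xi>. (1 + \<xi>\<^sup>2) powr s' * (cmod (fourier_L2 u \<xi>))\<^sup>2)"
  proof (rule weighted_int[OF u, where C=1])
    show "\<bar>(1 + \<xi>\<^sup>2) powr s'\<bar> \<le> 1 * (1 + \<xi>\<^sup>2) powr s" for \<xi>
      using ss by (simp add: powr_mono)
  qed measurable
  then show ?thesis using u unfolding sobolev_def by simp
qed



lemma quad_nonneg: "0 \<le> (cmod Y)\<^sup>2 + 2*c*Re (X * cnj Y) + c\<^sup>2*(cmod X)\<^sup>2"
proof -
  have "(cmod Y)\<^sup>2 + 2*c*Re (X * cnj Y) + c\<^sup>2*(cmod X)\<^sup>2 = (Re Y + c * Re X)\<^sup>2 + (Im Y + c * Im X)\<^sup>2"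
    unfolding cmod_power2 by (simp add: power2_eq_square algebra_simps)
  then show ?thesis by simp
qed

lemma re_bound: "\<bar>Re (X * cnj Y)\<bar> \<le> (cmod X)\<^sup>2 + (cmod Y)\<^sup>2"
proof -
  have "\<bar>Re (X * cnj Y)\<bar> \<le> cmod (X * cnj Y)" by (rule abs_Re_le_cmod)
  also have "\<dots> = cmod X * cmod Y" by (simp add: norm_mult)
  also have "\<dots> \<le> (cmod X)\<^sup>2 + (cmod Y)\<^sup>2"
  proof -
    have h1: "2 * (cmod X * cmod Y) \<le> (cmod X)\<^sup>2 + (cmod Y)\<^sup>2"
      using zero_le_power2[of "cmod X - cmod Y"] by (simp add: power2_eq_square algebra_simps)
    have h2: "0 \<le> cmod X * cmod Y" by simp
    from h1 h2 show ?thesis by linarith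
  qed
  finally show ?thesis .
qed

lemma cnj_meas[measurable (raw)]:
  "f \<in> borel_measurable M \<Longrightarrow> (\<lambda>x. cnj (f x)) \<in> borel_measurable M"
  by (rule measurable_compose[OF _ borel_measurable_continuous_onI]) (auto intro: continuous_on_cnj continuous_on_id)

lemma Qf_scale: "Qf p (\<lambda>x. t * u x) = \<bar>t\<bar> powr (p + 1) * Qf p u"
proof -
  have "Qf p (\<lambda>x. t * u x) = (LINT x|lborel. \<bar>t\<bar> powr (p + 1) * \<bar>u x\<bar> powr (p + 1))"
    unfolding Qf_def by (simp add: abs_mult powr_mult)
  also have "\<dots> = \<bar>t\<bar> powr (p + 1) * Qf p u" unfolding Qf_def by simp
  finally show ?thesis .
qed

locale setting =
  fixes l b :: "real \<Rightarrow> real" and c s0 w0 C1 C2 :: real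
  assumes lm[measurable]: "l \<in> borel_measurable borel" and bm[measurable]: "b \<in> borel_measurable borel"
   and bpos: "\<And>\<xi>. b \<xi> > 0" and lc: "\<And>\<xi>. c\<^sup>2 \<le> l \<xi>"
   and lb: "\<And>\<xi>. l \<xi> / b \<xi> \<le> C1 * (1+\<xi>\<^sup>2) powr s0"
   and ib: "\<And>\<xi>. 1 / b \<xi> \<le> C2 * (1+\<xi>\<^sup>2) powr w0"
   and w0s0: "w0 \<le> s0"
begin

lemma lml[measurable]: "l \<in> borel_measurable lborel" using lm by simp
lemma bml[measurable]: "b \<in> borel_measurable lborel" using bm by simp

lemma C2pos: "C2 > 0"
proof -
  have "0 < 1 / b 0" using bpos[of 0] by simp
  also have "\<dots> \<le> C2 * (1+0\<^sup>2) powr w0" by (rule ib)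
  finally show ?thesis by simp
qed

lemma int_LB:
  assumes u: "u \<in> sobolev s0"
  shows "integrable lborel (\<lambda>\<xi>. l \<xi> / b \<xi> * (cmod (fourier_L2 u \<xi>))\<^sup>2)"
proof (rule weighted_int[OF u, where C=C1])
  fix \<xi>
  have "0 \<le> l \<xi> / b \<xi>" using lc[of \<xi>] bpos[of \<xi>] by (simp add: order_trans[OF zero_le_power2])
  then show "\<bar>l \<xi> / b \<xi>\<bar> \<le> C1 * (1 + \<xi>\<^sup>2) powr s0" using lb[of \<xi>] by simp
qed measurable

lemma int_B:
  assumes u: "u \<in> sobolev s" and ss: "w0 \<le> s"
  shows "integrable lborel (\<lambda>\<xi>. (cmod (fourier_L2 u \<xi>))\<^sup>2 / b \<xi>)"
proof -
  have "integrable lborel (\<lambda>\<xi>. 1 / b \<xi> * (cmod (fourier_L2 u \<xi>))\<^sup>2)"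
  proof (rule weighted_int[OF u, where C=C2])
    fix \<xi>
    have "\<bar>1 / b \<xi>\<bar> = 1 / b \<xi>" using bpos[of \<xi>] by simp
    also have "\<dots> \<le> C2 * (1+\<xi>\<^sup>2) powr w0" by (rule ib)
    also have "\<dots> \<le> C2 * (1+\<xi>\<^sup>2) powr s" using C2pos ss by (intro mult_left_mono powr_mono) auto
    finally show "\<bar>1 / b \<xi>\<bar> \<le> C2 * (1 + \<xi>\<^sup>2) powr s" .
  qed measurable
  then show ?thesis by simp
qed

lemma Ic_nonneg:
  assumes u: "u \<in> sobolev s0"
  shows "Ic l b c u \<ge> 0"
proof -
  have iB: "integrable lborel (\<lambda>\<xi>. (cmod (fourier_L2 u \<xi>))\<^sup>2 / b \<xi>)" by (rule int_B[OF u w0s0])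
  have "c\<^sup>2 * B_norm2 b u = (LINT \<xi>|lborel. c\<^sup>2 * ((cmod (fourier_L2 u \<xi>))\<^sup>2 / b \<xi>))"
    unfolding B_norm2_def by (rule integral_mult_right_zero[symmetric])
  also have "\<dots> \<le> LB_norm2 l b u"
    unfolding LB_norm2_def
  proof (rule integral_mono)
    show "integrable lborel (\<lambda>\<xi>. c\<^sup>2 * ((cmod (fourier_L2 u \<xi>))\<^sup>2 / b \<xi>))"
      using iB by (rule Bochner_Integration.integrable_mult_right)
    show "integrable lborel (\<lambda>\<xi>. l \<xi> / b \<xi> * (cmod (fourier_L2 u \<xi>))\<^sup>2)" by (rule int_LB[OF u])
    fix \<xi>
    have "c\<^sup>2 / b \<xi> \<le> l \<xi> / b \<xi>" using lc[of \<xi>] bpos[of \<xi>] by (simp add: divide_right_mono)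
    then show "c\<^sup>2 * ((cmod (fourier_L2 u \<xi>))\<^sup>2 / b \<xi>) \<le> l \<xi> / b \<xi> * (cmod (fourier_L2 u \<xi>))\<^sup>2"
      by (metis mult_right_mono zero_le_power2 times_divide_eq_right mult.commute)
  qed
  finally show ?thesis unfolding Ic_def by simp
qed

lemma lower:
  assumes u: "u \<in> sobolev s0" and w: "w \<in> sobolev w0"
  shows "Ic l b c u - Qf p u / (p+1) \<le> Ef l b p (u, w) + c * Mf b (u, w)"
proof -
  define U where "U = fourier_L2 u"
  define W where "W = fourier_L2 w"
  have Um[measurable]: "U \<in> borel_measurable lborel" unfolding U_def by (rule sob_D(4)[OF u])
  have Wm[measurable]: "W \<in> borel_measurable lborel" unfolding W_def by (rule sob_D(4)[OF w])
  have iBu: "integrable lborel (\<lambda>\<xi>. (cmod (U \<xi>))\<^sup>2 / b \<xi>)" unfolding U_def by (rule int_B[OF u w0s0])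
  have iBw: "integrable lborel (\<lambda>\<xi>. (cmod (W \<xi>))\<^sup>2 / b \<xi>)" unfolding W_def by (rule int_B[OF w order_refl])
  have iM: "integrable lborel (\<lambda>\<xi>. Re (U \<xi> * cnj (W \<xi>)) / b \<xi>)"
  proof (rule Bochner_Integration.integrable_bound[of _ "\<lambda>\<xi>. (cmod (U \<xi>))\<^sup>2 / b \<xi> + (cmod (W \<xi>))\<^sup>2 / b \<xi>"])
    show "integrable lborel (\<lambda>\<xi>. (cmod (U \<xi>))\<^sup>2 / b \<xi> + (cmod (W \<xi>))\<^sup>2 / b \<xi>)"
      using iBu iBw by (rule Bochner_Integration.integrable_add)
    show "AE \<xi> in lborel. norm (Re (U \<xi> * cnj (W \<xi>)) / b \<xi>) \<le> norm ((cmod (U \<xi>))\<^sup>2 / b \<xi> + (cmod (W \<xi>))\<^sup>2 / b \<xi>)"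
    proof (intro AE_I2)
      fix \<xi>
      have bp: "b \<xi> > 0" by (rule bpos)
      have "\<bar>Re (U \<xi> * cnj (W \<xi>))\<bar> / b \<xi> \<le> ((cmod (U \<xi>))\<^sup>2 + (cmod (W \<xi>))\<^sup>2) / b \<xi>"
        using bp re_bound[of "U \<xi>" "W \<xi>"] by (intro divide_right_mono) auto
      moreover have "norm (Re (U \<xi> * cnj (W \<xi>)) / b \<xi>) = \<bar>Re (U \<xi> * cnj (W \<xi>))\<bar> / b \<xi>"
        using bp by (simp only: real_norm_def abs_divide abs_of_pos)
      moreover have "norm ((cmod (U \<xi>))\<^sup>2 / b \<xi> + (cmod (W \<xi>))\<^sup>2 / b \<xi>) = ((cmod (U \<xi>))\<^sup>2 + (cmod (W \<xi>))\<^sup>2) / b \<xi>"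
        using bp by (simp add: add_divide_distrib[symmetric])
      ultimately show "norm (Re (U \<xi> * cnj (W \<xi>)) / b \<xi>) \<le> norm ((cmod (U \<xi>))\<^sup>2 / b \<xi> + (cmod (W \<xi>))\<^sup>2 / b \<xi>)"
        by linarith
    qed
  qed measurable
  have "B_norm2 b w / 2 + c * Mf b (u, w) + c\<^sup>2 / 2 * B_norm2 b u =
     (LINT \<xi>|lborel. (1/2) * ((cmod (W \<xi>))\<^sup>2 / b \<xi>) + c * (Re (U \<xi> * cnj (W \<xi>)) / b \<xi>) + (c\<^sup>2/2) * ((cmod (U \<xi>))\<^sup>2 / b \<xi>))"
  proof -
    have i1: "integrable lborel (\<lambda>\<xi>. (1/2) * ((cmod (W \<xi>))\<^sup>2 / b \<xi>))" using iBw by (rule Bochner_Integration.integrable_mult_right)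
    have i2: "integrable lborel (\<lambda>\<xi>. c * (Re (U \<xi> * cnj (W \<xi>)) / b \<xi>))" using iM by (rule Bochner_Integration.integrable_mult_right)
    have i3: "integrable lborel (\<lambda>\<xi>. (c\<^sup>2/2) * ((cmod (U \<xi>))\<^sup>2 / b \<xi>))" using iBu by (rule Bochner_Integration.integrable_mult_right)
    show ?thesis
      apply (subst Bochner_Integration.integral_add[OF Bochner_Integration.integrable_add[OF i1 i2] i3])
      apply (subst Bochner_Integration.integral_add[OF i1 i2])
      apply (simp only: integral_mult_right_zero B_norm2_def Mf_def U_def W_def fst_conv snd_conv)
      done
  qed
  also have "\<dots> \<ge> 0"
  proof (rule integral_nonneg_AE, intro AE_I2)
    fix \<xi>
    have bp: "b \<xi> > 0" by (rule bpos)
    have "(1/2) * ((cmod (W \<xi>))\<^sup>2 / b \<xi>) + c * (Re (U \<xi> * cnj (W \<xi>)) / b \<xi>) + (c\<^sup>2/2) * ((cmod (U \<xi>))\<^sup>2 / b \<xi>)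
       = ((cmod (W \<xi>))\<^sup>2 + 2*c*Re (U \<xi> * cnj (W \<xi>)) + c\<^sup>2*(cmod (U \<xi>))\<^sup>2) / (2 * b \<xi>)"
      using bp by (simp add: field_simps)
    also have "\<dots> \<ge> 0" using bp quad_nonneg[of "W \<xi>" c "U \<xi>"] by simp
    finally show "0 \<le> (1/2) * ((cmod (W \<xi>))\<^sup>2 / b \<xi>) + c * (Re (U \<xi> * cnj (W \<xi>)) / b \<xi>) + (c\<^sup>2/2) * ((cmod (U \<xi>))\<^sup>2 / b \<xi>)" .
  qed
  finally show ?thesis unfolding Ef_def Ic_def by simp
qed

lemma LB_scale:
  assumes u: "u \<in> sobolev s0"
  shows "LB_norm2 l b (\<lambda>x. t * u x) = t\<^sup>2 * LB_norm2 l b u"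
proof -
  have tu: "(\<lambda>x. t * u x) \<in> sobolev s0" by (rule sob_scale[OF u])
  note [measurable] = sob_D(4)[OF u] sob_D(4)[OF tu]
  have "LB_norm2 l b (\<lambda>x. t * u x) = (LINT \<xi>|lborel. t\<^sup>2 * (l \<xi> / b \<xi> * (cmod (fourier_L2 u \<xi>))\<^sup>2))"
    unfolding LB_norm2_def
    by (rule integral_cong_AE) (use fourier_scale_ae[OF sob_D(1,2)[OF u], of t] in \<open>measurable, eventually_elim, simp add: norm_mult power_mult_distrib\<close>)
  then show ?thesis unfolding LB_norm2_def by (simp only: integral_mult_right_zero)
qed

lemma B_scale:
  assumes u: "u \<in> sobolev s"
  shows "B_norm2 b (\<lambda>x. t * u x) = t\<^sup>2 * B_norm2 b u"
proof -
  have tu: "(\<lambda>x. t * u x) \<in> sobolev s" by (rule sob_scale[OF u])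
  note [measurable] = sob_D(4)[OF u] sob_D(4)[OF tu]
  have "B_norm2 b (\<lambda>x. t * u x) = (LINT \<xi>|lborel. t\<^sup>2 * ((cmod (fourier_L2 u \<xi>))\<^sup>2 / b \<xi>))"
    unfolding B_norm2_def
    by (rule integral_cong_AE) (use fourier_scale_ae[OF sob_D(1,2)[OF u], of t] in \<open>measurable, eventually_elim, simp add: norm_mult power_mult_distrib\<close>)
  then show ?thesis unfolding B_norm2_def by (simp only: integral_mult_right_zero)
qed

lemma Ic_scale:
  assumes u: "u \<in> sobolev s0"
  shows "Ic l b c (\<lambda>x. t * u x) = t\<^sup>2 * Ic l b c u"
  unfolding Ic_def LB_scale[OF u] B_scale[OF u] by (simp add: algebra_simps)

lemma Mf_scale:
  assumes u: "u \<in> sobolev s"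
  shows "Mf b (\<lambda>x. K * u x, \<lambda>x. t * u x) = K * t * B_norm2 b u"
proof -
  have Ku: "(\<lambda>x. K * u x) \<in> sobolev s" by (rule sob_scale[OF u])
  have tu: "(\<lambda>x. t * u x) \<in> sobolev s" by (rule sob_scale[OF u])
  note [measurable] = sob_D(4)[OF u] sob_D(4)[OF tu] sob_D(4)[OF Ku]
  have "Mf b (\<lambda>x. K * u x, \<lambda>x. t * u x) = (LINT \<xi>|lborel. K * t * ((cmod (fourier_L2 u \<xi>))\<^sup>2 / b \<xi>))"
    unfolding Mf_def fst_conv snd_conv
  proof (rule integral_cong_AE)
    show "AE \<xi> in lborel. Re (fourier_L2 (\<lambda>x. K * u x) \<xi> * cnj (fourier_L2 (\<lambda>x. t * u x) \<xi>)) / b \<xi> =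
        K * t * ((cmod (fourier_L2 u \<xi>))\<^sup>2 / b \<xi>)"
      using fourier_scale_ae[OF sob_D(1,2)[OF u], of t] fourier_scale_ae[OF sob_D(1,2)[OF u], of K]
    proof eventually_elim
      case (elim \<xi>)
      have "Re (complex_of_real K * fourier_L2 u \<xi> * cnj (complex_of_real t * fourier_L2 u \<xi>)) = K * t * (cmod (fourier_L2 u \<xi>))\<^sup>2"
        unfolding cmod_power2 by (simp add: power2_eq_square algebra_simps)
      then show ?case using elim by simp
    qed
  qed measurable
  then show ?thesis unfolding B_norm2_def by (simp only: integral_mult_right_zero)
qed

end



lemma smooth_cont:
  assumes "smooth_fun f"
  shows "f \<in> borel_measurable borel"
proof (rule borel_measurable_continuous_onI)
  have "f differentiable (at x)" for x using assms unfolding smooth_fun_def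
    by (metis funpow_0 id_def)
  then have "isCont f x" for x by (rule differentiable_imp_continuous_within)
  then show "continuous_on UNIV f" by (intro continuous_at_imp_continuous_on) auto
qed

lemma setting_from:
  fixes l b :: "real \<Rightarrow> real" and r \<rho> c :: real
  assumes rho: "\<rho> \<ge> 0"
    and l_smooth: "smooth_fun l" and b_smooth: "smooth_fun b"
    and l_lower: "\<exists>A>0. \<forall>\<xi>. A * (1 + \<xi>\<^sup>2) powr (\<rho> / 2) \<le> l \<xi>"
    and l_upper: "\<exists>A>0. \<forall>\<xi>. l \<xi> \<le> A * (1 + \<xi>\<^sup>2) powr (\<rho> / 2)"
    and b_lower: "\<exists>A>0. \<forall>\<xi>. A * (1 + \<xi>\<^sup>2) powr (- r / 2) \<le> b \<xi>"
    and c: "c\<^sup>2 < best_lower l \<rho>"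
  shows "\<exists>C1 C2. setting l b c ((r + \<rho>) / 2) ((r + \<rho>) / 2 - \<rho> / 2) C1 C2"
proof -
  obtain A0 where A0: "A0 > 0" "\<And>\<xi>. A0 * (1 + \<xi>\<^sup>2) powr (\<rho> / 2) \<le> l \<xi>" using l_lower by blast
  obtain A1 where A1: "A1 > 0" "\<And>\<xi>. l \<xi> \<le> A1 * (1 + \<xi>\<^sup>2) powr (\<rho> / 2)" using l_upper by blast
  obtain A2 where A2: "A2 > 0" "\<And>\<xi>. A2 * (1 + \<xi>\<^sup>2) powr (- r / 2) \<le> b \<xi>" using b_lower by blast
  define P where "P \<xi> = 1 + \<xi>\<^sup>2" for \<xi> :: real
  have P: "P \<xi> \<ge> 1" for \<xi> unfolding P_def by simp
  have Ppos: "P \<xi> > 0" for \<xi> using P[of \<xi>] by simp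
  have bpos: "b \<xi> > 0" for \<xi>
    using A2(2)[of \<xi>] A2(1) Ppos[of \<xi>] unfolding P_def
    by (smt (verit) mult_pos_pos powr_gt_zero)
  define f where "f \<xi> = l \<xi> / (1 + \<xi>\<^sup>2) powr (\<rho> / 2)" for \<xi>
  have fA0: "A0 \<le> f \<xi>" for \<xi>
    using A0(2)[of \<xi>] Ppos[of \<xi>] unfolding f_def P_def by (simp add: pos_le_divide_eq)
  have bdd: "bdd_below (range f)" using fA0 by (intro bdd_belowI[of _ A0]) auto
  have BL0: "A0 \<le> best_lower l \<rho>"
    unfolding best_lower_def f_def[symmetric] by (rule cInf_greatest) (auto intro: fA0)
  have lc: "c\<^sup>2 \<le> l \<xi>" for \<xi>
  proof -
    have "best_lower l \<rho> \<le> f \<xi>" unfolding best_lower_def f_def[symmetric] by (rule cInf_lower[OF _ bdd]) simp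
    then have "best_lower l \<rho> * (1 + \<xi>\<^sup>2) powr (\<rho> / 2) \<le> l \<xi>"
      using Ppos[of \<xi>] unfolding f_def P_def by (simp add: pos_le_divide_eq)
    moreover have "best_lower l \<rho> \<le> best_lower l \<rho> * (1 + \<xi>\<^sup>2) powr (\<rho> / 2)"
      using BL0 A0(1) ge_one_powr_ge_zero[OF P[of \<xi>, unfolded P_def], of "\<rho>/2"] rho
      by (simp add: mult_le_cancel_left1)
    ultimately show ?thesis using c by linarith
  qed
  have lb: "l \<xi> / b \<xi> \<le> (A1 / A2) * (1 + \<xi>\<^sup>2) powr ((r + \<rho>) / 2)" for \<xi>
  proof -
    have l0: "0 \<le> l \<xi>" using lc[of \<xi>] by (smt (verit) zero_le_power2)
    have q: "0 < A2 * (1 + \<xi>\<^sup>2) powr (- r / 2)" using A2(1) Ppos[of \<xi>] unfolding P_def by (intro mult_pos_pos) auto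
    have "l \<xi> / b \<xi> \<le> A1 * (1 + \<xi>\<^sup>2) powr (\<rho> / 2) / (A2 * (1 + \<xi>\<^sup>2) powr (- r / 2))"
      by (rule frac_le[OF _ A1(2) q A2(2)]) (use A1(1) in simp)
    also have "\<dots> = (A1 / A2) * ((1 + \<xi>\<^sup>2) powr (\<rho> / 2) / (1 + \<xi>\<^sup>2) powr (- r / 2))" by simp
    also have "(1 + \<xi>\<^sup>2) powr (\<rho> / 2) / (1 + \<xi>\<^sup>2) powr (- r / 2) = (1 + \<xi>\<^sup>2) powr ((r + \<rho>) / 2)"
    proof -
      have e: "(r + \<rho>) / 2 = \<rho> / 2 - (- r / 2)" by simp
      show ?thesis unfolding e by (rule powr_diff[symmetric])
    qed
    finally show ?thesis .
  qed
  have ib: "1 / b \<xi> \<le> (1 / A2) * (1 + \<xi>\<^sup>2) powr ((r + \<rho>) / 2 - \<rho> / 2)" for \<xi>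
  proof -
    have q: "0 < A2 * (1 + \<xi>\<^sup>2) powr (- r / 2)" using A2(1) Ppos[of \<xi>] unfolding P_def by (intro mult_pos_pos) auto
    have "1 / b \<xi> \<le> 1 / (A2 * (1 + \<xi>\<^sup>2) powr (- r / 2))"
      by (rule frac_le[OF _ order_refl q A2(2)]) simp
    also have "\<dots> = (1 / A2) * (1 + \<xi>\<^sup>2) powr ((r + \<rho>) / 2 - \<rho> / 2)"
    proof -
      have e: "(r + \<rho>) / 2 - \<rho> / 2 = r / 2" "- r / 2 = - (r / 2)" by (simp_all add: field_simps)
      have X: "(1 + \<xi>\<^sup>2) powr (r/2) > 0" using Ppos[of \<xi>] unfolding P_def by simp
      show ?thesis unfolding e powr_minus_divide using X A2(1) by (simp add: field_simps)
    qed
    finally show ?thesis .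
  qed
  have "setting l b c ((r + \<rho>) / 2) ((r + \<rho>) / 2 - \<rho> / 2) (A1 / A2) (1 / A2)"
    by unfold_locales (use smooth_cont[OF l_smooth] smooth_cont[OF b_smooth] bpos lc lb ib rho in auto)
  then show ?thesis by blast
qed

theorem lemma4p2:
  fixes l b :: "real \<Rightarrow> real" and r \<rho> p c :: real
    and \<Phi> :: "(real \<Rightarrow> real) \<times> (real \<Rightarrow> real)"
  assumes rho: "\<rho> \<ge> 0" and r: "r \<ge> 0" and rr: "r + \<rho> / 2 \<ge> 1" and p: "p > 1"
    and l_smooth: "smooth_fun l" and b_smooth: "smooth_fun b"
    and l_ord: "symbol_order l \<rho>" and b_ord: "symbol_order b (- r)"
    and l_lower: "\<exists>A>0. \<forall>\<xi>. A * (1 + \<xi>\<^sup>2) powr (\<rho> / 2) \<le> l \<xi>"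
    and l_upper: "\<exists>A>0. \<forall>\<xi>. l \<xi> \<le> A * (1 + \<xi>\<^sup>2) powr (\<rho> / 2)"
    and b_lower: "\<exists>A>0. \<forall>\<xi>. A * (1 + \<xi>\<^sup>2) powr (- r / 2) \<le> b \<xi>"
    and b_upper: "\<exists>A>0. \<forall>\<xi>. b \<xi> \<le> A * (1 + \<xi>\<^sup>2) powr (- r / 2)"
    and c: "c\<^sup>2 < best_lower l \<rho>"
    and \<Phi>: "\<Phi> \<in> GGc l b r \<rho> p c"
  shows "\<Phi> \<in> Xspace r \<rho> \<and>
         Qf p (fst \<Phi>) = 2 powr ((p + 1) / (p - 1)) * (m1 l b r \<rho> p c) powr ((p + 1) / (p - 1)) \<and>
         (\<forall>U \<in> Xspace r \<rho>.
            Qf p (fst U) = 2 powr ((p + 1) / (p - 1)) * (m1 l b r \<rho> p c) powr ((p + 1) / (p - 1))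
            \<longrightarrow> Ef l b p \<Phi> + c * Mf b \<Phi> \<le> Ef l b p U + c * Mf b U)"
proof -
  define s0 where "s0 = (r + \<rho>) / 2"
  define w0 where "w0 = (r + \<rho>) / 2 - \<rho> / 2"
  obtain C1 C2 where "setting l b c s0 w0 C1 C2"
    using setting_from[OF rho l_smooth b_smooth l_lower l_upper b_lower c] unfolding s0_def w0_def by blast
  then interpret S: setting l b c s0 w0 C1 C2 .
  define M where "M = m1 l b r \<rho> p c"
  define e where "e = (p + 1) / (p - 1)"
  define K where "K = (2 * M) powr (1 / (p - 1))"
  obtain \<phi> where \<Phi>eq: "\<Phi> = (\<phi>, \<lambda>x. - c * \<phi> x)" and \<phi>G: "\<phi> \<in> Gc l b r \<rho> p c"
    using \<Phi> unfolding GGc_def by blast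
  obtain \<psi> where \<phi>eq: "\<phi> = (\<lambda>x. K * \<psi> x)" and \<psi>: "\<psi> \<in> sobolev s0" and Q\<psi>: "Qf p \<psi> = 1"
      and I\<psi>: "Ic l b c \<psi> = M"
    using \<phi>G unfolding Gc_def K_def M_def s0_def by blast
  have M0: "M \<ge> 0" using S.Ic_nonneg[OF \<psi>] I\<psi> by simp
  have K0: "K \<ge> 0" unfolding K_def by simp
  have Kp: "K powr (p + 1) = 2 powr e * M powr e"
  proof -
    have "K powr (p + 1) = (2 * M) powr (1 / (p - 1) * (p + 1))" unfolding K_def by (rule powr_powr)
    also have "1 / (p - 1) * (p + 1) = e" unfolding e_def by simp
    finally show ?thesis using M0 by (simp add: powr_mult)
  qed
  have snd_eq: "(\<lambda>x. - c * \<phi> x) = (\<lambda>x. (- c * K) * \<psi> x)" unfolding \<phi>eq by (simp add: mult.assoc)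
  have \<psi>w: "\<psi> \<in> sobolev w0" by (rule sob_mono[OF \<psi>]) (use rho in \<open>simp add: s0_def w0_def\<close>)
  have w0s: "s0 - \<rho> / 2 = w0" by (simp add: s0_def w0_def)
  have a1: "(\<lambda>x. K * \<psi> x) \<in> sobolev s0" by (rule sob_scale[OF \<psi>])
  have a2: "(\<lambda>x. (- c * K) * \<psi> x) \<in> sobolev w0" by (rule sob_scale[OF \<psi>w])
  have X: "\<Phi> \<in> Xspace r \<rho>"
    unfolding Xspace_def w0_def[symmetric] s0_def[symmetric] \<Phi>eq snd_eq unfolding \<phi>eq
    using a1 a2 w0s by (simp only: mem_Times_iff fst_conv snd_conv)
  have Q\<Phi>: "Qf p (fst \<Phi>) = K powr (p + 1)"
    unfolding \<Phi>eq \<phi>eq fst_conv Qf_scale Q\<psi> using K0 by simp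
  have val: "Ef l b p \<Phi> + c * Mf b \<Phi> = K\<^sup>2 * M - K powr (p + 1) / (p + 1)"
  proof -
    have E1: "Ef l b p \<Phi> = B_norm2 b (\<lambda>x. (- c * K) * \<psi> x) / 2 + LB_norm2 l b (\<lambda>x. K * \<psi> x) / 2 - Qf p (\<lambda>x. K * \<psi> x) / (p + 1)"
      unfolding Ef_def \<Phi>eq snd_conv fst_conv unfolding snd_eq unfolding \<phi>eq ..
    have Q1: "Qf p (\<lambda>x. K * \<psi> x) = K powr (p + 1)" using Q\<Phi> unfolding \<Phi>eq \<phi>eq by simp
    have "Ef l b p \<Phi> = (- c * K)\<^sup>2 * B_norm2 b \<psi> / 2 + K\<^sup>2 * LB_norm2 l b \<psi> / 2 - K powr (p + 1) / (p + 1)"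
      unfolding E1 Q1 S.B_scale[OF \<psi>] S.LB_scale[OF \<psi>] ..
    moreover have "Mf b \<Phi> = K * (- c * K) * B_norm2 b \<psi>"
      unfolding \<Phi>eq snd_eq unfolding \<phi>eq by (rule S.Mf_scale[OF \<psi>])
    ultimately show ?thesis using I\<psi> unfolding Ic_def by (simp add: power2_eq_square algebra_simps)
  qed
  have bdd: "bdd_below {Ic l b c \<psi> | \<psi>. \<psi> \<in> sobolev ((r + \<rho>) / 2) \<and> Qf p \<psi> = 1}"
    by (rule bdd_belowI[of _ 0]) (use S.Ic_nonneg in \<open>auto simp: s0_def\<close>)
  have main: "Ef l b p \<Phi> + c * Mf b \<Phi> \<le> Ef l b p U + c * Mf b U"
    if U: "U \<in> Xspace r \<rho>" and QU: "Qf p (fst U) = 2 powr e * M powr e" for U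
  proof -
    have u: "fst U \<in> sobolev s0" and w: "snd U \<in> sobolev w0"
      using U unfolding Xspace_def s0_def w0_def by auto
    have QU': "Qf p (fst U) = K powr (p + 1)" using QU Kp by simp
    have Ilow: "K\<^sup>2 * M \<le> Ic l b c (fst U)"
    proof (cases "K = 0")
      case True then show ?thesis using S.Ic_nonneg[OF u] by simp
    next
      case False
      then have Kpos: "K > 0" using K0 by simp
      define u' where "u' = (\<lambda>x. (1 / K) * fst U x)"
      have u': "u' \<in> sobolev s0" unfolding u'_def by (rule sob_scale[OF u])
      have "Qf p u' = (1 / K) powr (p + 1) * K powr (p + 1)"
        unfolding u'_def Qf_scale QU' using Kpos by simp
      also have "\<dots> = 1" using Kpos by (simp add: powr_mult[symmetric])
      finally have Qu': "Qf p u' = 1" .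
      have "M \<le> Ic l b c u'"
        unfolding M_def m1_def
        by (rule cInf_lower[OF _ bdd]) (use u' Qu' in \<open>auto simp: s0_def\<close>)
      also have "\<dots> = (1 / K)\<^sup>2 * Ic l b c (fst U)" unfolding u'_def by (rule S.Ic_scale[OF u])
      finally have "M \<le> (1 / K)\<^sup>2 * Ic l b c (fst U)" .
      then have "K\<^sup>2 * M \<le> K\<^sup>2 * ((1 / K)\<^sup>2 * Ic l b c (fst U))"
        by (rule mult_left_mono) simp_all
      also have "\<dots> = Ic l b c (fst U)" using Kpos by (simp add: power2_eq_square field_simps)
      finally show ?thesis .
    qed
    have "Ic l b c (fst U) - Qf p (fst U) / (p + 1) \<le> Ef l b p (fst U, snd U) + c * Mf b (fst U, snd U)"
      by (rule S.lower[OF u w])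
    then have "Ic l b c (fst U) - K powr (p + 1) / (p + 1) \<le> Ef l b p U + c * Mf b U" using QU' by simp
    then show ?thesis using val Ilow by linarith
  qed
  show ?thesis
    using X Q\<Phi> Kp main unfolding M_def[symmetric] e_def[symmetric] by auto
qed


end
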